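(* Let $q$ be a prime power with $q\equiv 1\pmod{52}$. Fix a primitive root $\alpha$ of $\mathbb{F}_q$ and set $\beta=\alpha^{(q-1)/13}$. Let $\chi$ be the quadratic residue character of $\mathbb{F}_q$. The following statements are equivalent: (i) $(q,13)$ gives a $3$-design; (ii) $(q,26)$ gives a $3$-design; (iii) the sequence $(\chi(1-\beta),\chi(1-\beta^2),\dots,\chi(1-\beta^6))$ is one of $\pm(1,1,-1,1,-1,-1)$, $\pm(1,1,-1,-1,-1,1)$, $\pm(1,-1,1,1,-1,-1)$, $\pm(1,-1,1,-1,-1,1)$.
   Context: Let $q$ be a power of an odd prime. The group $\mathrm{PSL}(2,q)$ acts on the projective line $\mathrm{PG}(1,q)=\mathbb{F}_q\cup\{\infty\}$ by linear fractional transformations $z\mapsto (az+b)/(cz+d)$, where $a,b,c,d\in\mathbb{F}_q$ with $ad-bc$ a nonzero square (matrices taken modulo $\pm I$). A $k$-subset $B$ of $\mathrm{PG}(1,q)$ is a starter of a $3$-design if the orbit $\{gB: g\in\mathrm{PSL}(2,q)\}$ is the block set of a $3$-$(q+1,k,\lambda)$ design for some positive integer $\lambda$. For $q\equiv1\pmod 4$ and a divisor $k$ of $q-1$, let $B$ be the unique subgroup of order $k$ of $\mathbb{F}_q^\times$; we say $(q,k)$ gives a $3$-design if $B$ is a starter of a $3$-design under $\mathrm{PSL}(2,q)$. The quadratic residue character $\chi:\mathbb{F}_q^\times\to\{\pm1\}$ is $\chi(a)=1$ if $a$ is a nonzero square and $\chi(a)=-1$ otherwise. *)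

theory Defs
  imports Main
begin

text \<open>The projective line PG(1,q) over a finite field 'a is modelled as 'a option,
  with None playing the role of the point at infinity.\<close>

definition lft :: "'a::field \<Rightarrow> 'a \<Rightarrow> 'a \<Rightarrow> 'a \<Rightarrow> 'a option \<Rightarrow> 'a option" where
  "lft a b c d z = (case z of
      None \<Rightarrow> (if c = 0 then None else Some (a / c))
    | Some x \<Rightarrow> (if c * x + d = 0 then None else Some ((a * x + b) / (c * x + d))))"

definition PSL2 :: "('a::field option \<Rightarrow> 'a option) set" where
  "PSL2 = {lft a b c d | a b c d. a * d - b * c \<noteq> 0 \<and> (\<exists>s. a * d - b * c = s ^ 2)}"

definition PSL2_orbit :: "'a::field option set \<Rightarrow> 'a option set set" where
  "PSL2_orbit B = {g ` B | g. g \<in> PSL2}"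

definition starter3 :: "nat \<Rightarrow> 'a::{finite,field} option set \<Rightarrow> bool" where
  "starter3 k B \<longleftrightarrow> card B = k \<and>
     (\<exists>lam::nat. lam > 0 \<and>
        (\<forall>T::'a option set. card T = 3 \<longrightarrow> card {X \<in> PSL2_orbit B. T \<subseteq> X} = lam))"

definition mult_subgroup :: "nat \<Rightarrow> 'a::{finite,field} set" where
  "mult_subgroup k = {x. x \<noteq> 0 \<and> x ^ k = 1}"

definition gives_3design :: "'a::{finite,field} itself \<Rightarrow> nat \<Rightarrow> bool" where
  "gives_3design _ k \<longleftrightarrow> starter3 k (Some ` (mult_subgroup k :: 'a set))"

definition primitive_root :: "'a::{finite,field} \<Rightarrow> bool" where
  "primitive_root \<alpha> \<longleftrightarrow> \<alpha> \<noteq> 0 \<and> (\<forall>x. x \<noteq> 0 \<longrightarrow> (\<exists>n::nat. \<alpha> ^ n = x))"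

definition qchi :: "'a::field \<Rightarrow> int" where
  "qchi a = (if a \<noteq> 0 \<and> (\<exists>s. a = s ^ 2) then 1 else -1)"

end

theory Submission
  imports Defs
begin


lemma card_nonzero: "card {x::'a::{finite,field}. x \<noteq> 0} = card (UNIV::'a set) - 1"
proof -
  have "{x::'a. x \<noteq> 0} = UNIV - {0}" by auto
  thus ?thesis by (simp add: card_Diff_subset)
qed

definition sgn0 :: "'a::field \<Rightarrow> int" where
  "sgn0 x = (if x = 0 then 0 else qchi x)"

locale prim =
  fixes \<alpha> :: "'a::{finite,field}"
  assumes prim: "primitive_root \<alpha>"
  and q4: "card (UNIV::'a set) mod 4 = 1"
  fixes ord :: nat
  assumes ord_def: "ord = card (UNIV::'a set) - 1"
begin

lemma a_nz: "\<alpha> \<noteq> 0" using prim unfolding primitive_root_def by auto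

lemma exists_root1: "\<exists>k. 0 < k \<and> k < card (UNIV::'a set) \<and> \<alpha> ^ k = 1"
proof -
  have "\<not> inj_on (\<lambda>n. \<alpha> ^ n) {..<card (UNIV::'a set)}"
  proof
    assume inj: "inj_on (\<lambda>n. \<alpha> ^ n) {..<card (UNIV::'a set)}"
    have "(\<lambda>n. \<alpha> ^ n) ` {..<card (UNIV::'a set)} \<subseteq> {x. x \<noteq> 0}" using a_nz by auto
    from card_inj_on_le[OF inj this] have "card {..<card (UNIV::'a set)} \<le> card {x::'a. x \<noteq> 0}" by simp
    hence "card (UNIV::'a set) \<le> card (UNIV::'a set) - 1"
      by (simp only: card_lessThan card_nonzero)
    moreover have "card (UNIV::'a set) > 0" by (simp add: card_gt_0_iff)
    ultimately show False by linarith
  qed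
  then obtain i j where ij: "i < card (UNIV::'a set)" "j < card (UNIV::'a set)" "i \<noteq> j" "\<alpha>^i = \<alpha>^j"
    unfolding inj_on_def by auto
  have "\<exists>i j. i < j \<and> j < card (UNIV::'a set) \<and> \<alpha>^i = \<alpha>^j"
    using ij by (metis linorder_neqE_nat)
  then obtain i j where ij: "i < j" "j < card (UNIV::'a set)" "\<alpha>^i = \<alpha>^j" by blast
  have "\<alpha>^j = \<alpha>^i * \<alpha>^(j-i)" using ij(1) by (simp add: power_add[symmetric])
  hence "\<alpha>^(j-i) = 1" using ij a_nz by simp
  thus ?thesis using ij by (intro exI[of _ "j-i"]) auto
qed

definition "o1 = (LEAST k. 0 < k \<and> \<alpha> ^ k = 1)"

lemma o1: "0 < o1" "\<alpha> ^ o1 = 1" "o1 < card (UNIV::'a set)"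
proof -
  obtain k where k: "0 < k" "k < card (UNIV::'a set)" "\<alpha> ^ k = 1" using exists_root1 by blast
  have "0 < o1 \<and> \<alpha> ^ o1 = 1" unfolding o1_def by (rule LeastI[of _ k]) (use k in auto)
  moreover have "o1 \<le> k" unfolding o1_def by (rule Least_le) (use k in auto)
  ultimately show "0 < o1" "\<alpha> ^ o1 = 1" "o1 < card (UNIV::'a set)" using k by auto
qed

lemma pow_mod_o1: "\<alpha> ^ n = \<alpha> ^ (n mod o1)"
proof -
  have "n = o1 * (n div o1) + n mod o1" by simp
  hence "\<alpha> ^ n = \<alpha> ^ (o1 * (n div o1)) * \<alpha> ^ (n mod o1)" by (metis power_add)
  also have "\<dots> = (\<alpha> ^ o1) ^ (n div o1) * \<alpha> ^ (n mod o1)" by (simp only: power_mult)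
  finally show ?thesis using o1 by simp
qed

lemma o1_eq: "o1 = ord"
proof -
  have "{x. x \<noteq> 0} \<subseteq> (\<lambda>n. \<alpha> ^ n) ` {..<o1}"
  proof
    fix x :: 'a assume "x \<in> {x. x \<noteq> 0}"
    then obtain n where "\<alpha> ^ n = x" using prim unfolding primitive_root_def by auto
    hence "x = \<alpha> ^ (n mod o1)" using pow_mod_o1 by simp
    thus "x \<in> (\<lambda>n. \<alpha> ^ n) ` {..<o1}" using o1 by auto
  qed
  hence "card {x::'a. x \<noteq> 0} \<le> card ((\<lambda>n. \<alpha> ^ n) ` {..<o1})" by (intro card_mono) auto
  also have "\<dots> \<le> o1" using card_image_le[of "{..<o1}"] by simp
  finally have "ord \<le> o1" using card_nonzero[where 'a='a] ord_def by simp
  thus ?thesis using o1 ord_def by simp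
qed

lemma pow_ord: "\<alpha> ^ ord = 1" using o1 o1_eq by simp
lemma ord_pos: "0 < ord" using o1 o1_eq by simp
lemma pow_mod: "\<alpha> ^ n = \<alpha> ^ (n mod ord)" using pow_mod_o1 o1_eq by simp

lemma pow_eq1: "\<alpha> ^ n = 1 \<longleftrightarrow> ord dvd n"
proof
  assume h: "\<alpha> ^ n = 1"
  show "ord dvd n"
  proof (rule ccontr)
    assume "\<not> ord dvd n"
    hence "0 < n mod ord" by (simp add: dvd_eq_mod_eq_0)
    moreover have "\<alpha> ^ (n mod ord) = 1" using h pow_mod by simp
    ultimately have "o1 \<le> n mod ord" unfolding o1_def by (intro Least_le) auto
    moreover have "n mod ord < ord" using ord_pos by simp
    ultimately show False using o1_eq by simp
  qed
next
  assume "ord dvd n" then obtain m where "n = ord * m" by auto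
  thus "\<alpha> ^ n = 1" by (simp add: power_mult pow_ord)
qed

lemma pow_eq: "\<alpha> ^ n = \<alpha> ^ m \<longleftrightarrow> n mod ord = m mod ord"
proof -
  { fix n m :: nat assume le: "n \<le> m"
    have "\<alpha> ^ m = \<alpha> ^ n * \<alpha> ^ (m - n)" using le by (simp add: power_add[symmetric])
    hence "\<alpha> ^ n = \<alpha> ^ m \<longleftrightarrow> \<alpha> ^ (m - n) = 1" using a_nz by auto
    also have "\<dots> \<longleftrightarrow> ord dvd (m - n)" by (rule pow_eq1)
    also have "\<dots> \<longleftrightarrow> n mod ord = m mod ord" using le
      by (metis mod_eq_dvd_iff_nat)
    finally have "\<alpha> ^ n = \<alpha> ^ m \<longleftrightarrow> n mod ord = m mod ord" . }
  thus ?thesis by (metis nat_le_linear)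
qed

lemma nz_pow: "x \<noteq> 0 \<Longrightarrow> \<exists>n. x = \<alpha> ^ n"
  using prim unfolding primitive_root_def by metis

lemma four_dvd_ord: "4 dvd ord"
proof -
  have "card (UNIV::'a set) > 0" by (simp add: card_gt_0_iff)
  hence "card (UNIV::'a set) \<ge> 1" by linarith
  thus ?thesis using q4 ord_def by (metis mod_eq_dvd_iff_nat mod_less one_less_numeral_iff semiring_norm(76))
qed

lemma ord_even: "even ord" using four_dvd_ord by (metis dvd_trans even_numeral)

lemma sq_pow: "(\<exists>s. \<alpha> ^ n = s ^ 2) \<longleftrightarrow> even n"
proof
  assume "\<exists>s. \<alpha> ^ n = s ^ 2"
  then obtain s where s: "\<alpha> ^ n = s ^ 2" by blast
  have "s \<noteq> 0" using s a_nz by auto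
  then obtain m where "s = \<alpha> ^ m" using nz_pow by blast
  hence "\<alpha> ^ n = \<alpha> ^ (2 * m)" using s by (simp add: power_mult mult.commute)
  hence "n mod ord = (2*m) mod ord" using pow_eq by blast
  thus "even n" using ord_even by (metis dvd_mod_iff dvd_triv_left)
next
  assume "even n" then obtain m where "n = 2 * m" by auto
  thus "\<exists>s. \<alpha> ^ n = s ^ 2" by (intro exI[of _ "\<alpha>^m"]) (simp add: power_mult mult.commute)
qed

lemma qchi_pow: "qchi (\<alpha> ^ n) = (-1) ^ n"
  using sq_pow[of n] a_nz unfolding qchi_def by auto

lemma sgn0_mult: "sgn0 (x * y :: 'a) = sgn0 x * sgn0 y"
proof (cases "x = 0 \<or> y = 0")
  case True thus ?thesis unfolding sgn0_def by auto
next
  case False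
  then obtain n m where "x = \<alpha> ^ n" "y = \<alpha> ^ m" using nz_pow by blast
  thus ?thesis using False a_nz unfolding sgn0_def by (simp add: power_add[symmetric] qchi_pow)
qed

lemma sgn0_pm: "(x::'a) \<noteq> 0 \<Longrightarrow> sgn0 x = 1 \<or> sgn0 x = -1"
  unfolding sgn0_def qchi_def by auto

lemma sgn0_sq: "(x::'a) \<noteq> 0 \<Longrightarrow> sgn0 x * sgn0 x = 1"
  using sgn0_pm by fastforce

lemma sgn0_pow_a: "sgn0 (\<alpha> ^ n) = (-1) ^ n"
  using a_nz by (simp add: sgn0_def qchi_pow)

lemma minus1: "\<alpha> ^ (ord div 2) = -1"
proof -
  have "(\<alpha> ^ (ord div 2))^2 = 1" using ord_even pow_ord
    by (simp add: power_mult[symmetric])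
  hence "(\<alpha> ^ (ord div 2) - 1) * (\<alpha> ^ (ord div 2) + 1) = 0"
    by (simp add: algebra_simps power2_eq_square)
  moreover have "\<alpha> ^ (ord div 2) \<noteq> 1"
  proof
    assume "\<alpha> ^ (ord div 2) = 1"
    hence "ord dvd ord div 2" using pow_eq1 by blast
    moreover have "0 < ord div 2" using four_dvd_ord ord_pos by auto
    ultimately show False using ord_pos by (metis dvd_imp_le div_less_dividend le_less_trans
       less_irrefl one_less_numeral_iff semiring_norm(76))
  qed
  ultimately show ?thesis by (simp add: eq_neg_iff_add_eq_0)
qed

lemma sgn0_m1: "sgn0 (-1::'a) = 1"
proof -
  have "even (ord div 2)" using four_dvd_ord by auto
  thus ?thesis using sgn0_pow_a[of "ord div 2"] minus1 by simp
qed

lemma sgn0_neg: "sgn0 (- x :: 'a) = sgn0 x"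
proof -
  have "-x = (-1) * x" by simp
  thus ?thesis using sgn0_mult[of "-1" x] sgn0_m1 by simp
qed

lemma sgn0_one: "sgn0 (1::'a) = 1" unfolding sgn0_def qchi_def by (auto intro: exI[of _ 1])

end


type_synonym 'a mat = "'a \<times> 'a \<times> 'a \<times> 'a"

fun rep :: "'a::field option \<Rightarrow> 'a \<times> 'a" where
  "rep None = (1, 0)" | "rep (Some x) = (x, 1)"

fun proj :: "'a::field \<times> 'a \<Rightarrow> 'a option" where
  "proj (x, y) = (if y = 0 then None else Some (x / y))"

fun det2 :: "'a::field \<times> 'a \<Rightarrow> 'a \<times> 'a \<Rightarrow> 'a" where
  "det2 (x1, y1) (x2, y2) = x1 * y2 - x2 * y1"

fun mv :: "'a::field mat \<Rightarrow> 'a \<times> 'a \<Rightarrow> 'a \<times> 'a" where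
  "mv (a, b, c, d) (x, y) = (a * x + b * y, c * x + d * y)"

fun mdet :: "'a::field mat \<Rightarrow> 'a" where
  "mdet (a, b, c, d) = a * d - b * c"

fun mmul :: "'a::field mat \<Rightarrow> 'a mat \<Rightarrow> 'a mat" where
  "mmul (a, b, c, d) (a', b', c', d') = (a*a' + b*c', a*b' + b*d', c*a' + d*c', c*b' + d*d')"

fun adj :: "'a::field mat \<Rightarrow> 'a mat" where
  "adj (a, b, c, d) = (d, -b, -c, a)"

fun sc :: "'a::field \<Rightarrow> 'a \<times> 'a \<Rightarrow> 'a \<times> 'a" where
  "sc l (x, y) = (l * x, l * y)"

fun LL :: "'a::field mat \<Rightarrow> 'a option \<Rightarrow> 'a option" where
  "LL (a, b, c, d) = lft a b c d"

lemma LL_proj: "LL M P = proj (mv M (rep P))"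
  by (cases M; cases P) (auto simp: lft_def)

lemma rep_nz: "rep P \<noteq> (0, 0)" by (cases P) auto

lemma proj_rep: "proj (rep P) = P" by (cases P) auto

lemma rep_proj: "v \<noteq> (0, 0) \<Longrightarrow> \<exists>l. l \<noteq> 0 \<and> rep (proj v) = sc l v"
proof (cases v)
  case (Pair x y)
  assume nz: "v \<noteq> (0,0)"
  show ?thesis
  proof (cases "y = 0")
    case True
    hence "x \<noteq> 0" using nz Pair by auto
    thus ?thesis using True Pair by (intro exI[of _ "1/x"]) auto
  next
    case False
    thus ?thesis using Pair by (intro exI[of _ "1/y"]) auto
  qed
qed

lemma proj_sc: "l \<noteq> 0 \<Longrightarrow> proj (sc l v) = proj v"
  by (cases v) auto

lemma mv_sc: "mv M (sc l v) = sc l (mv M v)"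
  by (cases M; cases v) (auto simp: algebra_simps)

lemma mv_mmul: "mv (mmul M N) v = mv M (mv N v)"
  by (cases M; cases N; cases v) (auto simp: algebra_simps)

lemma mdet_mmul: "mdet (mmul M N) = mdet M * mdet N"
  by (cases M; cases N) (auto simp: algebra_simps)

lemma mdet_adj: "mdet (adj M) = mdet M"
  by (cases M) (auto simp: algebra_simps)

lemma mmul_adj: "mmul (adj M) M = (mdet M, 0, 0, mdet M)"
  by (cases M) (auto simp: algebra_simps)

lemma mmul_adj2: "mmul M (adj M) = (mdet M, 0, 0, mdet M)"
  by (cases M) (auto simp: algebra_simps)

lemma mv_scalar: "mv (D, 0, 0, D) v = sc D v"
  by (cases v) auto

lemma mv_nz: assumes "mdet M \<noteq> 0" "v \<noteq> (0, 0)" shows "mv M v \<noteq> (0, 0)"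
proof
  assume h: "mv M v = (0, 0)"
  have "mv (adj M) (mv M v) = sc (mdet M) v" by (simp add: mv_mmul[symmetric] mmul_adj mv_scalar)
  moreover have "mv (adj M) (0, 0) = (0, 0)" by (cases "adj M") simp
  ultimately have "sc (mdet M) v = (0,0)" using h by simp
  thus False using assms by (cases v) simp
qed

lemma LL_comp: "mdet N \<noteq> 0 \<Longrightarrow> LL M (LL N P) = LL (mmul M N) P"
proof -
  assume N: "mdet N \<noteq> 0"
  have nz: "mv N (rep P) \<noteq> (0,0)" using mv_nz[OF N rep_nz] .
  obtain l where l: "l \<noteq> 0" "rep (proj (mv N (rep P))) = sc l (mv N (rep P))"
    using rep_proj[OF nz] by blast
  have "LL M (LL N P) = proj (mv M (sc l (mv N (rep P))))" by (simp add: LL_proj l)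
  also have "\<dots> = proj (mv (mmul M N) (rep P))" using l by (simp add: mv_sc proj_sc mv_mmul)
  finally show ?thesis by (simp add: LL_proj)
qed

lemma LL_scalar: "D \<noteq> 0 \<Longrightarrow> LL (D, 0, 0, D) P = P"
  by (simp add: LL_proj mv_scalar proj_sc proj_rep del: LL.simps)

lemma LL_adj: "mdet M \<noteq> 0 \<Longrightarrow> LL (adj M) (LL M P) = P"
  by (simp add: LL_comp mmul_adj LL_scalar del: LL.simps)

lemma LL_adj2: "mdet M \<noteq> 0 \<Longrightarrow> LL M (LL (adj M) P) = P"
  by (simp add: LL_comp mmul_adj2 LL_scalar mdet_adj del: LL.simps)

lemma LL_inj: "mdet M \<noteq> 0 \<Longrightarrow> inj (LL M)"
  by (metis LL_adj injI)

lemma det2_mv: "det2 (mv M u) (mv M v) = mdet M * det2 u v"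
  by (cases M; cases u; cases v) (auto simp: algebra_simps)

lemma det2_sc1: "det2 (sc l u) v = l * det2 u v"
  by (cases u; cases v) (auto simp: algebra_simps)

lemma det2_sc2: "det2 u (sc l v) = l * det2 u v"
  by (cases u; cases v) (auto simp: algebra_simps)

lemma det2_rep: "det2 (rep P) (rep Q) = 0 \<longleftrightarrow> P = Q"
  by (cases P; cases Q) auto

lemma det2_swap: "det2 u v = - det2 v u"
  by (cases u; cases v) auto

definition tri :: "'a::field option \<Rightarrow> 'a option \<Rightarrow> 'a option \<Rightarrow> 'a" where
  "tri P Q R = det2 (rep P) (rep Q) * det2 (rep Q) (rep R) * det2 (rep R) (rep P)"

lemma tri_nz: "tri P Q R \<noteq> 0 \<longleftrightarrow> P \<noteq> Q \<and> Q \<noteq> R \<and> R \<noteq> P"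
  unfolding tri_def by (simp add: det2_rep)

lemma tri_Some: "tri (Some x) (Some y) (Some z) = (x - y) * (y - z) * (z - x)"
  unfolding tri_def by simp

lemma tri_rot: "tri Q R P = tri P Q R" unfolding tri_def by (simp add: algebra_simps)
lemma tri_swap: "tri Q P R = - tri P Q R"
  by (cases P; cases Q; cases R) (auto simp: tri_def algebra_simps)

lemma rep_LL: "mdet M \<noteq> 0 \<Longrightarrow> \<exists>l. l \<noteq> 0 \<and> rep (LL M P) = sc l (mv M (rep P))"
  using rep_proj[OF mv_nz[OF _ rep_nz]] by (simp add: LL_proj del: LL.simps)


lemma tri_LL: assumes "mdet M \<noteq> 0"
  shows "\<exists>m. m \<noteq> 0 \<and> tri (LL M P) (LL M Q) (LL M R) = m^2 * mdet M ^ 3 * tri P Q R"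
proof -
  obtain a where a: "a \<noteq> 0" "rep (LL M P) = sc a (mv M (rep P))" using rep_LL[OF assms] by blast
  obtain b where b: "b \<noteq> 0" "rep (LL M Q) = sc b (mv M (rep Q))" using rep_LL[OF assms] by blast
  obtain c where c: "c \<noteq> 0" "rep (LL M R) = sc c (mv M (rep R))" using rep_LL[OF assms] by blast
  have "tri (LL M P) (LL M Q) (LL M R) =
     (a * b * mdet M * det2 (rep P) (rep Q)) * (b * c * mdet M * det2 (rep Q) (rep R)) *
     (c * a * mdet M * det2 (rep R) (rep P))"
    unfolding tri_def a(2) b(2) c(2) det2_sc1 det2_sc2 det2_mv by (simp only: mult_ac)
  also have "\<dots> = (a*b*c)^2 * mdet M ^ 3 * tri P Q R"
    unfolding tri_def by (simp add: power2_eq_square power3_eq_cube mult_ac)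
  finally show ?thesis using a b c by (intro exI[of _ "a*b*c"]) simp
qed

lemma PSL2_iff: "g \<in> PSL2 \<longleftrightarrow> (\<exists>M. g = LL M \<and> mdet M \<noteq> 0 \<and> (\<exists>s. mdet M = s^2))"
proof
  assume "g \<in> PSL2"
  then obtain a b c d where "g = lft a b c d" "a * d - b * c \<noteq> 0" "\<exists>s. a * d - b * c = s ^ 2"
    unfolding PSL2_def by blast
  thus "\<exists>M. g = LL M \<and> mdet M \<noteq> 0 \<and> (\<exists>s. mdet M = s^2)"
    by (intro exI[of _ "(a,b,c,d)"]) simp
next
  assume "\<exists>M. g = LL M \<and> mdet M \<noteq> 0 \<and> (\<exists>s. mdet M = s^2)"
  then obtain a b c d where "g = LL (a,b,c,d)" "mdet (a,b,c,d) \<noteq> 0" "\<exists>s. mdet (a,b,c,d) = s^2"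
    by (metis prod_cases4)
  thus "g \<in> PSL2" unfolding PSL2_def by simp blast
qed


lemma tri_perm:
  assumes "{P,Q,R} = {P',Q',R'}" "P \<noteq> Q" "Q \<noteq> R" "R \<noteq> P" "P' \<noteq> Q'" "Q' \<noteq> R'" "R' \<noteq> P'"
  shows "tri P' Q' R' = tri P Q R \<or> tri P' Q' R' = - tri P Q R"
proof -
  have t: "tri Q R P = tri P Q R" "tri R P Q = tri P Q R" "tri Q P R = - tri P Q R"
     "tri P R Q = - tri P Q R" "tri R Q P = - tri P Q R"
    using tri_rot[of P Q R] tri_rot[of Q R P] tri_swap[of P Q R] tri_swap[of R P Q] tri_swap[of Q R P]
    by simp_all
  have "P' = P \<or> P' = Q \<or> P' = R" "Q' = P \<or> Q' = Q \<or> Q' = R" "R' = P \<or> R' = Q \<or> R' = R"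
    using assms(1) by (metis insertCI insertE singletonD)+
  thus ?thesis using assms(2-7) by (elim disjE) (simp_all add: t)
qed

definition good :: "'a::field option set \<Rightarrow> bool" where
  "good T \<longleftrightarrow> (\<exists>P Q R. T = {P,Q,R} \<and> P \<noteq> Q \<and> Q \<noteq> R \<and> R \<noteq> P \<and> sgn0 (tri P Q R) = 1)"

context prim begin

lemma good_iff: fixes T :: "'a option set" assumes "T = {P,Q,R}" "P \<noteq> Q" "Q \<noteq> R" "R \<noteq> P"
  shows "good T \<longleftrightarrow> sgn0 (tri P Q R) = 1"
proof
  assume "good T"
  then obtain P' Q' R' where h: "T = {P',Q',R'}" "P' \<noteq> Q'" "Q' \<noteq> R'" "R' \<noteq> P'" "sgn0 (tri P' Q' R') = 1"
    unfolding good_def by blast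
  have "tri P Q R = tri P' Q' R' \<or> tri P Q R = - tri P' Q' R'"
    using tri_perm[of P' Q' R' P Q R] h assms by auto
  thus "sgn0 (tri P Q R) = 1" using h(5) sgn0_neg[of "tri P' Q' R'"] by auto
next
  assume "sgn0 (tri P Q R) = 1" thus "good T" using assms unfolding good_def by blast
qed

lemma sgn0_tri_pm: "(P::'a option) \<noteq> Q \<Longrightarrow> Q \<noteq> R \<Longrightarrow> R \<noteq> P \<Longrightarrow> sgn0 (tri P Q R) = 1 \<or> sgn0 (tri P Q R) = -1"
  using sgn0_pm tri_nz by blast

lemma sgn0_LL_tri: fixes M :: "'a mat" assumes "mdet M \<noteq> 0"
  shows "sgn0 (tri (LL M P) (LL M Q) (LL M R)) = sgn0 (mdet M) * sgn0 (tri P Q R)"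
proof -
  obtain m where m: "m \<noteq> 0" "tri (LL M P) (LL M Q) (LL M R) = m^2 * mdet M ^ 3 * tri P Q R"
    using tri_LL[OF assms] by blast
  have "m^2 * mdet M ^ 3 * tri P Q R = (m * m) * (mdet M * mdet M) * mdet M * tri P Q R"
    by (simp add: power2_eq_square power3_eq_cube mult_ac)
  hence "sgn0 (m^2 * mdet M ^ 3 * tri P Q R) = (sgn0 m * sgn0 m) * (sgn0 (mdet M) * sgn0 (mdet M)) * sgn0 (mdet M) * sgn0 (tri P Q R)"
    by (simp only: sgn0_mult)
  also have "\<dots> = sgn0 (mdet M) * sgn0 (tri P Q R)" using sgn0_sq m(1) assms by simp
  finally show ?thesis using m by simp
qed

lemma card3_LL: fixes M :: "'a mat" assumes "mdet M \<noteq> 0" "card T = 3" shows "card (LL M ` T) = 3"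
  using assms card_image[OF inj_on_subset[OF LL_inj[OF assms(1)] subset_UNIV]] by simp

lemma good_LL: fixes M :: "'a mat" assumes "mdet M \<noteq> 0" "card T = 3"
  shows "good (LL M ` T) \<longleftrightarrow> (good T \<longleftrightarrow> sgn0 (mdet M) = 1)"
proof -
  obtain P Q R where T: "T = {P,Q,R}" "P \<noteq> Q" "Q \<noteq> R" "R \<noteq> P"
    using assms(2) card_3_iff by metis
  have inj: "inj (LL M)" using LL_inj assms by blast
  have T': "LL M ` T = {LL M P, LL M Q, LL M R}" "LL M P \<noteq> LL M Q" "LL M Q \<noteq> LL M R" "LL M R \<noteq> LL M P"
    using T inj by (auto dest: injD)
  have "good (LL M ` T) \<longleftrightarrow> sgn0 (mdet M) * sgn0 (tri P Q R) = 1"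
    using good_iff[OF T'] sgn0_LL_tri[OF assms(1)] by simp
  moreover have "good T \<longleftrightarrow> sgn0 (tri P Q R) = 1" using good_iff[OF T] .
  moreover have "sgn0 (mdet M) = 1 \<or> sgn0 (mdet M) = -1" using sgn0_pm assms(1) by blast
  moreover have "sgn0 (tri P Q R) = 1 \<or> sgn0 (tri P Q R) = -1" using sgn0_tri_pm T by blast
  ultimately show ?thesis by auto
qed

lemma sgn0_1_sq: "sgn0 (x::'a) = 1 \<Longrightarrow> x \<noteq> 0 \<and> (\<exists>s. x = s^2)"
  unfolding sgn0_def qchi_def by (auto split: if_splits)

lemma sq_sgn0_1: "(x::'a) \<noteq> 0 \<Longrightarrow> x = s^2 \<Longrightarrow> sgn0 x = 1"
  unfolding sgn0_def qchi_def by auto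

end

lemma canon: fixes P Q R :: "'a::field option"
  assumes "P \<noteq> Q" "Q \<noteq> R" "R \<noteq> P"
  shows "\<exists>M. mdet M \<noteq> 0 \<and> LL M P = None \<and> LL M Q = Some 0 \<and> LL M R = Some 1"
proof -
  obtain u1 u2 where u: "rep P = (u1, u2)" by fastforce
  obtain v1 v2 where v: "rep Q = (v1, v2)" by fastforce
  obtain w1 w2 where w: "rep R = (w1, w2)" by fastforce
  define du where "du = det2 (rep P) (rep Q)"
  define a where "a = det2 (rep R) (rep Q) / du"
  define b where "b = det2 (rep P) (rep R) / du"
  have du: "du \<noteq> 0" unfolding du_def using assms det2_rep by blast
  have a: "a \<noteq> 0" unfolding a_def using assms det2_rep[of R Q] du by auto
  have b: "b \<noteq> 0" unfolding b_def using assms det2_rep[of P R] du by auto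
  define N where "N = (a * u1, b * v1, a * u2, b * v2)"
  have dN: "mdet N = a * b * du" unfolding N_def du_def using u v by (simp add: algebra_simps)
  hence dN0: "mdet N \<noteq> 0" using a b du by simp
  have e1: "mv N (1, 0) = sc a (rep P)" unfolding N_def using u by simp
  have e2: "mv N (0, 1) = sc b (rep Q)" unfolding N_def using v by simp
  have c1: "det2 (rep R) (rep Q) * u1 + det2 (rep P) (rep R) * v1 = w1 * du"
    unfolding du_def using u v w by (simp add: algebra_simps)
  have c2: "det2 (rep R) (rep Q) * u2 + det2 (rep P) (rep R) * v2 = w2 * du"
    unfolding du_def using u v w by (simp add: algebra_simps)
  have "a*u1 + b*v1 = w1" unfolding a_def b_def using c1 du by (simp add: field_simps)
  moreover have "a*u2 + b*v2 = w2" unfolding a_def b_def using c2 du by (simp add: field_simps)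
  ultimately have e3: "mv N (1, 1) = rep R" unfolding N_def using w by simp
  have key: "mv (adj N) (mv N x) = sc (mdet N) x" for x
    by (simp add: mv_mmul[symmetric] mmul_adj mv_scalar)
  have "LL (adj N) P = proj (mv (adj N) (rep P))" by (simp add: LL_proj del: LL.simps)
  also have "rep P = sc (1/a) (mv N (1, 0))" using e1 a by (cases "rep P") simp
  finally have 1: "LL (adj N) P = None" using key dN0 a by (simp add: mv_sc)
  have "LL (adj N) Q = proj (mv (adj N) (rep Q))" by (simp add: LL_proj del: LL.simps)
  also have "rep Q = sc (1/b) (mv N (0, 1))" using e2 b by (cases "rep Q") simp
  finally have 2: "LL (adj N) Q = Some 0" using key dN0 b by (simp add: mv_sc)
  have "LL (adj N) R = proj (mv (adj N) (rep R))" by (simp add: LL_proj del: LL.simps)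
  also have "rep R = mv N (1, 1)" using e3 by simp
  finally have 3: "LL (adj N) R = Some 1" using key dN0 by simp
  have "mdet (adj N) \<noteq> 0" using dN0 mdet_adj[of N] by simp
  thus ?thesis using 1 2 3 by blast
qed


lemma PSL2_comp: "g \<in> PSL2 \<Longrightarrow> h \<in> PSL2 \<Longrightarrow> g \<circ> h \<in> PSL2"
proof -
  assume "g \<in> PSL2" "h \<in> PSL2"
  then obtain M N s t where MN: "g = LL M" "mdet M \<noteq> 0" "mdet M = s^2" "h = LL N" "mdet N \<noteq> 0" "mdet N = t^2"
    unfolding PSL2_iff by blast
  have "g \<circ> h = LL (mmul M N)" using MN by (auto simp: LL_comp simp del: LL.simps)
  moreover have "mdet (mmul M N) = (s*t)^2" using MN by (simp add: mdet_mmul power_mult_distrib)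
  moreover have "mdet (mmul M N) \<noteq> 0" using MN by (simp add: mdet_mmul)
  ultimately show ?thesis unfolding PSL2_iff by blast
qed

lemma PSL2_inv: "g \<in> PSL2 \<Longrightarrow> \<exists>g' \<in> PSL2. (\<forall>P. g' (g P) = P) \<and> (\<forall>P. g (g' P) = P)"
proof -
  assume "g \<in> PSL2"
  then obtain M s where M: "g = LL M" "mdet M \<noteq> 0" "mdet M = s^2" unfolding PSL2_iff by blast
  have "LL (adj M) \<in> PSL2" unfolding PSL2_iff using M mdet_adj by metis
  thus ?thesis using M LL_adj LL_adj2 by metis
qed

lemma PSL2_id: "id \<in> PSL2"
proof -
  have "LL (1,0,0,1) = (id :: 'a::field option \<Rightarrow> _)" using LL_scalar[of "1::'a"] by (auto simp del: LL.simps)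
  moreover have "mdet (1,0,0,1::'a) = 1^2" by simp
  ultimately show ?thesis unfolding PSL2_iff by (metis one_neq_zero power_one)
qed

lemma PSL2_inj: "g \<in> PSL2 \<Longrightarrow> inj g"
  unfolding PSL2_iff using LL_inj by blast

context prim begin

lemma PSL2_good: fixes T :: "'a option set" assumes "g \<in> PSL2" "card T = 3"
  shows "card (g ` T) = 3 \<and> (good (g ` T) \<longleftrightarrow> good T)"
proof -
  obtain M s where M: "g = LL M" "mdet M \<noteq> 0" "mdet M = s^2" using assms(1) unfolding PSL2_iff by blast
  have "sgn0 (mdet M) = 1" using sq_sgn0_1 M by blast
  thus ?thesis using good_LL[OF M(2) assms(2)] card3_LL[OF M(2) assms(2)] M(1) by simp
qed

lemma S0_good: "good {None, Some (0::'a), Some 1}"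
  unfolding good_def by (intro exI[of _ None] exI[of _ "Some 0"] exI[of _ "Some 1"])
    (simp add: tri_def sgn0_one)

lemma S0_card: "card {None, Some (0::'a), Some 1} = 3" by simp

lemma trans: fixes T T' :: "'a option set"
  assumes "card T = 3" "card T' = 3" "good T \<longleftrightarrow> good T'"
  shows "\<exists>g \<in> PSL2. g ` T = T'"
proof -
  obtain P Q R where T: "T = {P,Q,R}" "P \<noteq> Q" "Q \<noteq> R" "R \<noteq> P"
    using assms(1) card_3_iff by metis
  obtain P' Q' R' where T': "T' = {P',Q',R'}" "P' \<noteq> Q'" "Q' \<noteq> R'" "R' \<noteq> P'"
    using assms(2) card_3_iff by metis
  obtain M where M: "mdet M \<noteq> 0" "LL M P = None" "LL M Q = Some 0" "LL M R = Some 1"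
    using canon[OF T(2-4)] by blast
  obtain M' where M': "mdet M' \<noteq> 0" "LL M' P' = None" "LL M' Q' = Some 0" "LL M' R' = Some 1"
    using canon[OF T'(2-4)] by blast
  let ?S0 = "{None, Some (0::'a), Some 1}"
  have im: "LL M ` T = ?S0" "LL M' ` T' = ?S0" using M M' T T' by auto
  have g1: "good T \<longleftrightarrow> sgn0 (mdet M) = 1" using good_LL[OF M(1) assms(1)] im S0_good by simp
  have g2: "good T' \<longleftrightarrow> sgn0 (mdet M') = 1" using good_LL[OF M'(1) assms(2)] im S0_good by simp
  have "sgn0 (mdet M) = sgn0 (mdet M')"
    using g1 g2 assms(3) sgn0_pm[of "mdet M"] sgn0_pm[of "mdet M'"] M(1) M'(1) by auto
  hence "sgn0 (mdet (mmul (adj M') M)) = 1"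
    using sgn0_sq[of "mdet M'"] M'(1) by (simp add: mdet_mmul mdet_adj sgn0_mult)
  then have sq: "mdet (mmul (adj M') M) \<noteq> 0 \<and> (\<exists>s. mdet (mmul (adj M') M) = s^2)" using sgn0_1_sq by blast
  have gdef: "LL (mmul (adj M') M) = LL (adj M') \<circ> LL M" using M(1) by (auto simp: LL_comp simp del: LL.simps)
  have "LL (mmul (adj M') M) \<in> PSL2" unfolding PSL2_iff using sq by blast
  moreover have "LL (mmul (adj M') M) ` T = T'"
  proof -
    have "LL (mmul (adj M') M) ` T = LL (adj M') ` (LL M ` T)" unfolding gdef by (rule image_comp[symmetric])
    also have "\<dots> = LL (adj M') ` ?S0" using im by simp
    also have "\<dots> = LL (adj M') ` LL M' ` T'" using im by simp
    also have "\<dots> = T'" using LL_adj[OF M'(1)] by (simp add: image_image del: LL.simps)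
    finally show ?thesis .
  qed
  ultimately show ?thesis by blast
qed

end


lemma orbI: "h \<in> PSL2 \<Longrightarrow> h ` B \<in> PSL2_orbit B"
  unfolding PSL2_orbit_def by (rule CollectI, rule exI[of _ h], simp)

lemma orbE: "X \<in> PSL2_orbit B \<Longrightarrow> \<exists>h. h \<in> PSL2 \<and> X = h ` B"
  unfolding PSL2_orbit_def by (simp add: conj_commute)

lemma orb_closed: assumes "g \<in> PSL2" "X \<in> PSL2_orbit B" shows "g ` X \<in> PSL2_orbit B"
proof -
  obtain h where h: "h \<in> PSL2" "X = h ` B" using orbE[OF assms(2)] by blast
  have "g ` X = (g \<circ> h) ` B" using h by (simp add: image_comp)
  moreover have "g \<circ> h \<in> PSL2" using PSL2_comp assms(1) h(1) by blast
  ultimately show ?thesis using orbI by metis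
qed

lemma B_in_orb: "B \<in> PSL2_orbit B"
  using orbI[OF PSL2_id, of B] by simp

definition cnt :: "'a::field option set \<Rightarrow> 'a option set \<Rightarrow> nat" where
  "cnt B T = card {X \<in> PSL2_orbit B. T \<subseteq> X}"

definition nP :: "bool \<Rightarrow> 'a::field option set \<Rightarrow> nat" where
  "nP b X = card {T. T \<subseteq> X \<and> card T = 3 \<and> good T = b}"

lemma image_cancel: "\<forall>P. g' (g P) = P \<Longrightarrow> g' ` (g ` X) = X"
  by (simp add: image_image)

lemma cnt_inv: assumes "g \<in> PSL2" shows "cnt B (g ` T) = cnt B T"
proof -
  obtain g' where g': "g' \<in> PSL2" "\<forall>P. g' (g P) = P" "\<forall>P. g (g' P) = P" using PSL2_inv[OF assms] by blast
  have "bij_betw (image g) {X \<in> PSL2_orbit B. T \<subseteq> X} {X \<in> PSL2_orbit B. g ` T \<subseteq> X}"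
  proof (rule bij_betw_byWitness[where f' = "image g'"])
    show "\<forall>a\<in>{X \<in> PSL2_orbit B. T \<subseteq> X}. g' ` g ` a = a" using image_cancel[where g'=g' and g=g, OF g'(2)] by blast
    show "\<forall>a\<in>{X \<in> PSL2_orbit B. g ` T \<subseteq> X}. g ` g' ` a = a" using image_cancel[where g'=g and g=g', OF g'(3)] by blast
    show "image g ` {X \<in> PSL2_orbit B. T \<subseteq> X} \<subseteq> {X \<in> PSL2_orbit B. g ` T \<subseteq> X}"
    proof
      fix Y assume "Y \<in> image g ` {X \<in> PSL2_orbit B. T \<subseteq> X}"
      then obtain X where X: "X \<in> PSL2_orbit B" "T \<subseteq> X" "Y = g ` X" by blast
      have "g ` T \<subseteq> Y" using X by blast
      thus "Y \<in> {X \<in> PSL2_orbit B. g ` T \<subseteq> X}" using orb_closed[OF assms X(1)] X(3) by blast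
    qed
    show "image g' ` {X \<in> PSL2_orbit B. g ` T \<subseteq> X} \<subseteq> {X \<in> PSL2_orbit B. T \<subseteq> X}"
    proof
      fix Y assume "Y \<in> image g' ` {X \<in> PSL2_orbit B. g ` T \<subseteq> X}"
      then obtain X where X: "X \<in> PSL2_orbit B" "g ` T \<subseteq> X" and Y: "Y = g' ` X" by blast
      have "T = g' ` g ` T" using image_cancel[where g'=g' and g=g, OF g'(2)] by simp
      also have "\<dots> \<subseteq> g' ` X" using X by blast
      finally show "Y \<in> {X \<in> PSL2_orbit B. T \<subseteq> X}" using orb_closed[OF g'(1) X(1)] Y by blast
    qed
  qed
  hence "card {X \<in> PSL2_orbit B. T \<subseteq> X} = card {X \<in> PSL2_orbit B. g ` T \<subseteq> X}"
    by (rule bij_betw_same_card)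
  thus ?thesis unfolding cnt_def by simp
qed


context prim begin

lemma cnt_const: fixes T T' :: "'a option set"
  assumes "card T = 3" "card T' = 3" "good T \<longleftrightarrow> good T'"
  shows "cnt B T = cnt B T'"
proof -
  obtain g where "g \<in> PSL2" "g ` T = T'" using trans[OF assms] by blast
  thus ?thesis using cnt_inv[of g B T] by simp
qed

lemma nP_inv: fixes X :: "'a option set" assumes "g \<in> PSL2" shows "nP b (g ` X) = nP b X"
proof -
  obtain g' where g': "g' \<in> PSL2" "\<forall>P. g' (g P) = P" "\<forall>P. g (g' P) = P" using PSL2_inv[OF assms] by blast
  have "bij_betw (image g) {T. T \<subseteq> X \<and> card T = 3 \<and> good T = b} {T. T \<subseteq> g ` X \<and> card T = 3 \<and> good T = b}"
  proof (rule bij_betw_byWitness[where f' = "image g'"])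
    show "\<forall>a\<in>{T. T \<subseteq> X \<and> card T = 3 \<and> good T = b}. g' ` g ` a = a"
      using image_cancel[where g'=g' and g=g, OF g'(2)] by blast
    show "\<forall>a\<in>{T. T \<subseteq> g ` X \<and> card T = 3 \<and> good T = b}. g ` g' ` a = a"
      using image_cancel[where g'=g and g=g', OF g'(3)] by blast
    show "image g ` {T. T \<subseteq> X \<and> card T = 3 \<and> good T = b} \<subseteq> {T. T \<subseteq> g ` X \<and> card T = 3 \<and> good T = b}"
    proof
      fix Y assume "Y \<in> image g ` {T. T \<subseteq> X \<and> card T = 3 \<and> good T = b}"
      then obtain T where T: "T \<subseteq> X" "card T = 3" "good T = b" "Y = g ` T" by blast
      have "Y \<subseteq> g ` X" using T by blast
      thus "Y \<in> {T. T \<subseteq> g ` X \<and> card T = 3 \<and> good T = b}" using PSL2_good[OF assms T(2)] T by simp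
    qed
    show "image g' ` {T. T \<subseteq> g ` X \<and> card T = 3 \<and> good T = b} \<subseteq> {T. T \<subseteq> X \<and> card T = 3 \<and> good T = b}"
    proof
      fix Y assume "Y \<in> image g' ` {T. T \<subseteq> g ` X \<and> card T = 3 \<and> good T = b}"
      then obtain T where T: "T \<subseteq> g ` X" "card T = 3" "good T = b" and Y: "Y = g' ` T" by blast
      have "g' ` T \<subseteq> g' ` g ` X" using T by blast
      also have "\<dots> = X" using image_cancel[where g'=g' and g=g, OF g'(2)] by simp
      finally show "Y \<in> {T. T \<subseteq> X \<and> card T = 3 \<and> good T = b}" using PSL2_good[OF g'(1) T(2)] T Y by simp
    qed
  qed
  hence "card {T. T \<subseteq> X \<and> card T = 3 \<and> good T = b} = card {T. T \<subseteq> g ` X \<and> card T = 3 \<and> good T = b}"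
    by (rule bij_betw_same_card)
  thus ?thesis unfolding nP_def by simp
qed

lemma double_count: fixes B :: "'a option set"
  shows "(\<Sum>T\<in>{T. card T = 3 \<and> good T = b}. cnt B T) = (\<Sum>X\<in>PSL2_orbit B. nP b X)"
proof -
  let ?C = "{T::'a option set. card T = 3 \<and> good T = b}"
  have "(\<Sum>T\<in>?C. cnt B T) = (\<Sum>T\<in>?C. \<Sum>X\<in>PSL2_orbit B. if T \<subseteq> X then 1 else 0)"
  proof (rule sum.cong[OF refl])
    fix T
    have "(\<Sum>X\<in>PSL2_orbit B. if T \<subseteq> X then 1 else 0) = (\<Sum>X\<in>{X \<in> PSL2_orbit B. T \<subseteq> X}. 1::nat)"
      by (rule sum.inter_filter[symmetric]) simp
    thus "cnt B T = (\<Sum>X\<in>PSL2_orbit B. if T \<subseteq> X then 1 else 0)" unfolding cnt_def by simp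
  qed
  also have "\<dots> = (\<Sum>X\<in>PSL2_orbit B. \<Sum>T\<in>?C. if T \<subseteq> X then 1 else 0)" by (rule sum.swap)
  also have "\<dots> = (\<Sum>X\<in>PSL2_orbit B. nP b X)"
  proof (rule sum.cong[OF refl])
    fix X
    have "(\<Sum>T\<in>?C. if T \<subseteq> X then 1 else 0) = (\<Sum>T\<in>{T \<in> ?C. T \<subseteq> X}. 1::nat)"
      by (rule sum.inter_filter[symmetric]) simp
    hence "(\<Sum>T\<in>?C. if T \<subseteq> X then 1 else 0) = card {T \<in> ?C. T \<subseteq> X}" by simp
    also have "{T \<in> ?C. T \<subseteq> X} = {T. T \<subseteq> X \<and> card T = 3 \<and> good T = b}" by blast
    finally show "(\<Sum>T\<in>?C. if T \<subseteq> X then 1 else 0) = nP b X" unfolding nP_def .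
  qed
  finally show ?thesis .
qed

lemma sum_orb: fixes B :: "'a option set"
  shows "(\<Sum>X\<in>PSL2_orbit B. nP b X) = card (PSL2_orbit B) * nP b B"
proof -
  have "(\<Sum>X\<in>PSL2_orbit B. nP b X) = (\<Sum>X\<in>PSL2_orbit B. nP b B)"
  proof (rule sum.cong[OF refl])
    fix X assume "X \<in> PSL2_orbit B"
    then obtain g where "g \<in> PSL2" "X = g ` B" using orbE by blast
    thus "nP b X = nP b B" using nP_inv by simp
  qed
  thus ?thesis by (simp only: sum_constant of_nat_id)
qed

end

context prim begin

definition "Mn = (\<alpha>, 0, 0, 1)"

lemma Mn: "mdet Mn \<noteq> 0" "sgn0 (mdet Mn) = -1"
  unfolding Mn_def using a_nz sgn0_pow_a[of 1] by auto

lemma card_classes: "card {T::'a option set. card T = 3 \<and> good T} = card {T::'a option set. card T = 3 \<and> \<not> good T}"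
proof -
  have "bij_betw (image (LL Mn)) {T::'a option set. card T = 3 \<and> good T} {T. card T = 3 \<and> \<not> good T}"
  proof (rule bij_betw_byWitness[where f' = "image (LL (adj Mn))"])
    show "\<forall>a\<in>{T::'a option set. card T = 3 \<and> good T}. LL (adj Mn) ` LL Mn ` a = a"
      using image_cancel[where g'="LL (adj Mn)" and g="LL Mn"] LL_adj[OF Mn(1)] by blast
    show "\<forall>a\<in>{T::'a option set. card T = 3 \<and> \<not> good T}. LL Mn ` LL (adj Mn) ` a = a"
      using image_cancel[where g'="LL Mn" and g="LL (adj Mn)"] LL_adj2[OF Mn(1)] by blast
    show "image (LL Mn) ` {T::'a option set. card T = 3 \<and> good T} \<subseteq> {T. card T = 3 \<and> \<not> good T}"
    proof
      fix Y assume "Y \<in> image (LL Mn) ` {T::'a option set. card T = 3 \<and> good T}"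
      then obtain T where T: "card T = 3" "good T" "Y = LL Mn ` T" by blast
      show "Y \<in> {T. card T = 3 \<and> \<not> good T}"
        using good_LL[OF Mn(1) T(1)] card3_LL[OF Mn(1) T(1)] Mn(2) T by simp
    qed
    have A: "mdet (adj Mn) \<noteq> 0" "sgn0 (mdet (adj Mn)) = -1" using Mn mdet_adj[of Mn] by simp_all
    show "image (LL (adj Mn)) ` {T::'a option set. card T = 3 \<and> \<not> good T} \<subseteq> {T. card T = 3 \<and> good T}"
    proof
      fix Y assume "Y \<in> image (LL (adj Mn)) ` {T::'a option set. card T = 3 \<and> \<not> good T}"
      then obtain T where T: "card T = 3" "\<not> good T" "Y = LL (adj Mn) ` T" by blast
      show "Y \<in> {T. card T = 3 \<and> good T}"
        using good_LL[OF A(1) T(1)] card3_LL[OF A(1) T(1)] A(2) T by simp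
    qed
  qed
  thus ?thesis by (rule bij_betw_same_card)
qed

definition "S0 = {None, Some (0::'a), Some 1}"
definition "S1 = LL Mn ` S0"

lemma S01: "card S0 = 3" "good S0" "card S1 = 3" "\<not> good S1"
proof -
  show a: "card S0 = 3" "good S0" unfolding S0_def using S0_good S0_card by simp_all
  show "card S1 = 3" unfolding S1_def using card3_LL[OF Mn(1) a(1)] .
  show "\<not> good S1" unfolding S1_def using good_LL[OF Mn(1) a(1)] a(2) Mn(2) by simp
qed

lemma cnt_class: fixes T :: "'a option set"
  assumes "card T = 3" shows "cnt B T = (if good T then cnt B S0 else cnt B S1)"
proof (cases "good T")
  case True thus ?thesis using cnt_const[OF assms S01(1)] S01(2) by simp
next
  case False thus ?thesis using cnt_const[OF assms S01(3)] S01(4) by simp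
qed

lemma sum_class: fixes B :: "'a option set"
  shows "card {T::'a option set. card T = 3 \<and> good T = b} * cnt B (if b then S0 else S1)
         = card (PSL2_orbit B) * nP b B"
proof -
  have "card {T::'a option set. card T = 3 \<and> good T = b} * cnt B (if b then S0 else S1)
     = (\<Sum>T\<in>{T::'a option set. card T = 3 \<and> good T = b}. cnt B (if b then S0 else S1))"
    by (simp only: sum_constant of_nat_id)
  also have "\<dots> = (\<Sum>T\<in>{T. card T = 3 \<and> good T = b}. cnt B T)"
    by (rule sum.cong[OF refl]) (use cnt_class in simp)
  also have "\<dots> = (\<Sum>X\<in>PSL2_orbit B. nP b X)" by (rule double_count)
  also have "\<dots> = card (PSL2_orbit B) * nP b B" by (rule sum_orb)
  finally show ?thesis .
qed

lemma starter_iff: fixes B :: "'a option set" assumes "card B \<ge> 3"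
  shows "starter3 k B \<longleftrightarrow> card B = k \<and> nP True B = nP False B"
proof -
  let ?m = "card {T::'a option set. card T = 3 \<and> good T}"
  let ?O = "card (PSL2_orbit B)"
  have m1: "card {T::'a option set. card T = 3 \<and> good T = True} = ?m" by (simp only: eq_True)
  have m2: "card {T::'a option set. card T = 3 \<and> good T = False} = ?m" using card_classes by (simp only: eq_False)
  have "S0 \<in> {T::'a option set. card T = 3 \<and> good T}" using S01 by simp
  moreover have "finite {T::'a option set. card T = 3 \<and> good T}" by simp
  ultimately have mpos: "?m > 0" using card_gt_0_iff[of "{T::'a option set. card T = 3 \<and> good T}"] by blast
  have "finite (PSL2_orbit B)" by simp
  hence Opos: "?O > 0" using B_in_orb[of B] card_gt_0_iff[of "PSL2_orbit B"] by blast
  have e1: "?m * cnt B S0 = ?O * nP True B" using sum_class[where b=True and B=B] unfolding m1 by (simp only: if_True)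
  have e2: "?m * cnt B S1 = ?O * nP False B" using sum_class[where b=False and B=B] unfolding m2 by (simp only: if_False)
  show ?thesis
  proof
    assume "starter3 k B"
    then obtain lam where "card B = k" "\<forall>T::'a option set. card T = 3 \<longrightarrow> cnt B T = lam"
      unfolding starter3_def cnt_def by blast
    hence "card B = k" "cnt B S0 = cnt B S1" using S01 by auto
    have "?O * nP True B = ?m * cnt B S0" using e1 by simp
    also have "\<dots> = ?m * cnt B S1" using \<open>cnt B S0 = cnt B S1\<close> by simp
    also have "\<dots> = ?O * nP False B" using e2 by simp
    finally have "?O * nP True B = ?O * nP False B" .
    hence "nP True B = nP False B" using Opos by (metis mult_left_cancel not_gr0)
    thus "card B = k \<and> nP True B = nP False B" using \<open>card B = k\<close> by simp
  next
    assume h: "card B = k \<and> nP True B = nP False B"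
    have "?m * cnt B S0 = ?O * nP True B" using e1 by simp
    also have "\<dots> = ?O * nP False B" using h by simp
    also have "\<dots> = ?m * cnt B S1" using e2 by simp
    finally have "?m * cnt B S0 = ?m * cnt B S1" .
    hence eq: "cnt B S0 = cnt B S1" using mpos mult_left_cancel[of ?m "cnt B S0" "cnt B S1"] by linarith
    obtain T where T: "T \<subseteq> B" "card T = 3" using obtain_subset_with_card_n[OF assms] by metis
    have "T \<in> {Ta. Ta \<subseteq> B \<and> card Ta = 3 \<and> good Ta = good T}" using T by simp
    moreover have "finite {Ta. Ta \<subseteq> B \<and> card Ta = 3 \<and> good Ta = good T}" by simp
    ultimately have "nP (good T) B > 0" unfolding nP_def using card_gt_0_iff by blast
    hence "nP True B > 0" using h by (cases "good T") auto
    hence "?O * nP True B > 0" using Opos by simp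
    hence "?m * cnt B S0 > 0" using e1 by simp
    hence "cnt B S0 > 0" by simp
    moreover have "\<forall>T::'a option set. card T = 3 \<longrightarrow> cnt B T = cnt B S0" using cnt_class eq by simp
    ultimately show "starter3 k B" unfolding starter3_def cnt_def using h by blast
  qed
qed

end


definition Sord :: "'a::field option set \<Rightarrow> int" where
  "Sord B = (\<Sum>P\<in>B. \<Sum>Q\<in>B. \<Sum>R\<in>B. sgn0 (tri P Q R))"

definition dist3 :: "'a \<times> 'a \<times> 'a \<Rightarrow> bool" where
  "dist3 x = (case x of (P, Q, R) \<Rightarrow> P \<noteq> Q \<and> Q \<noteq> R \<and> R \<noteq> P)"

definition set3 :: "'a \<times> 'a \<times> 'a \<Rightarrow> 'a set" where
  "set3 x = (case x of (P, Q, R) \<Rightarrow> {P, Q, R})"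

lemma fiber6:
  assumes "a \<noteq> b" "b \<noteq> c" "c \<noteq> a" "{a, b, c} \<subseteq> B"
  shows "{x \<in> B \<times> B \<times> B. dist3 x \<and> set3 x = {a, b, c}} =
    {(a,b,c),(a,c,b),(b,a,c),(b,c,a),(c,a,b),(c,b,a)}" (is "?L = ?R")
proof
  show "?L \<subseteq> ?R"
  proof
    fix x assume x: "x \<in> ?L"
    obtain P Q R where xe: "x = (P, Q, R)" by (cases x) auto
    have d: "P \<noteq> Q" "Q \<noteq> R" "R \<noteq> P" and s: "{P, Q, R} = {a, b, c}"
      using x unfolding xe dist3_def set3_def by auto
    have "P = a \<or> P = b \<or> P = c" "Q = a \<or> Q = b \<or> Q = c" "R = a \<or> R = b \<or> R = c"
      using s by (metis insertCI insertE singletonD)+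
    thus "x \<in> ?R" using d assms(1-3) unfolding xe by (elim disjE) simp_all
  qed
next
  have s: "{a,c,b} = {a,b,c}" "{b,a,c} = {a,b,c}" "{b,c,a} = {a,b,c}" "{c,a,b} = {a,b,c}" "{c,b,a} = {a,b,c}"
    by blast+
  have m: "a \<in> B" "b \<in> B" "c \<in> B" using assms(4) by auto
  show "?R \<subseteq> ?L" unfolding insert_subset empty_subsetI
    using assms(1-3) m s unfolding dist3_def set3_def by simp
qed

lemma card6:
  assumes "a \<noteq> b" "b \<noteq> c" "c \<noteq> a"
  shows "card {(a,b,c),(a,c,b),(b,a,c),(b,c,a),(c,a,b),(c,b,a)} = 6"
  using assms by (simp add: eq_commute)

context prim begin

lemma Sord_eq: fixes B :: "'a option set"
  shows "Sord B = 6 * (int (nP True B) - int (nP False B))"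
proof -
  let ?A = "B \<times> B \<times> B"
  let ?f = "\<lambda>x::'a option \<times> 'a option \<times> 'a option. case x of (P, Q, R) \<Rightarrow> sgn0 (tri P Q R)"
  let ?D = "{x \<in> ?A. dist3 x}"
  let ?S3 = "{T. T \<subseteq> B \<and> card T = 3}"
  let ?sg = "\<lambda>T::'a option set. if good T then (1::int) else -1"
  have "Sord B = (\<Sum>x\<in>?A. ?f x)"
    unfolding Sord_def by (simp add: sum.cartesian_product)
  also have "\<dots> = (\<Sum>x\<in>?D. ?f x)"
  proof (rule sum.mono_neutral_right)
    show "finite ?A" by simp
    show "?D \<subseteq> ?A" by blast
    show "\<forall>x\<in>?A - ?D. ?f x = 0"
    proof
      fix x assume "x \<in> ?A - ?D"
      then obtain P Q R where "x = (P,Q,R)" "\<not> (P \<noteq> Q \<and> Q \<noteq> R \<and> R \<noteq> P)"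
        unfolding dist3_def by (cases x) auto
      thus "?f x = 0" using tri_nz[of P Q R] unfolding sgn0_def by auto
    qed
  qed
  also have "\<dots> = (\<Sum>T\<in>set3 ` ?D. \<Sum>x\<in>{x. x \<in> ?D \<and> set3 x = T}. ?f x)"
    by (rule sum.image_gen) simp
  also have "set3 ` ?D = ?S3"
  proof
    show "set3 ` ?D \<subseteq> ?S3"
    proof
      fix T assume "T \<in> set3 ` ?D"
      then obtain P Q R where "T = {P,Q,R}" "P \<in> B" "Q \<in> B" "R \<in> B" "P \<noteq> Q" "Q \<noteq> R" "R \<noteq> P"
        unfolding set3_def dist3_def by auto
      thus "T \<in> ?S3" by simp
    qed
    show "?S3 \<subseteq> set3 ` ?D"
    proof
      fix T assume T: "T \<in> ?S3"
      hence "card T = 3" by simp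
      then obtain P Q R where PQR: "T = {P,Q,R}" "P \<noteq> Q" "Q \<noteq> R" "P \<noteq> R"
        unfolding card_3_iff by blast
      have "P \<in> B" "Q \<in> B" "R \<in> B" using T PQR(1) by auto
      hence "(P,Q,R) \<in> ?D" using PQR unfolding dist3_def by simp
      moreover have "T = set3 (P,Q,R)" using PQR unfolding set3_def by simp
      ultimately show "T \<in> set3 ` ?D" by (intro image_eqI[where x="(P,Q,R)"])
    qed
  qed
  also have "(\<Sum>T\<in>?S3. \<Sum>x\<in>{x. x \<in> ?D \<and> set3 x = T}. ?f x) = (\<Sum>T\<in>?S3. 6 * ?sg T)"
  proof (rule sum.cong[OF refl])
    fix T assume T: "T \<in> ?S3"
    hence "card T = 3" by simp
    then obtain a b c where abc: "T = {a,b,c}" "a \<noteq> b" "b \<noteq> c" "a \<noteq> c"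
      unfolding card_3_iff by blast
    have fib: "{x. x \<in> ?D \<and> set3 x = T} = {(a,b,c),(a,c,b),(b,a,c),(b,c,a),(c,a,b),(c,b,a)}"
      using fiber6[of a b c B] abc T by auto
    have val: "?f x = ?sg T" if "x \<in> {x. x \<in> ?D \<and> set3 x = T}" for x
    proof -
      obtain P Q R where xe: "x = (P,Q,R)" by (cases x) auto
      have d: "P \<noteq> Q" "Q \<noteq> R" "R \<noteq> P" "T = {P,Q,R}" using that unfolding xe dist3_def set3_def by auto
      show ?thesis using good_iff[OF d(4) d(1-3)] sgn0_tri_pm[OF d(1-3)] unfolding xe by auto
    qed
    have "(\<Sum>x\<in>{x. x \<in> ?D \<and> set3 x = T}. ?f x) = (\<Sum>x\<in>{x. x \<in> ?D \<and> set3 x = T}. ?sg T)"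
      using val by (rule sum.cong[OF refl])
    also have "\<dots> = of_nat (card {x. x \<in> ?D \<and> set3 x = T}) * ?sg T" by simp
    also have "card {x. x \<in> ?D \<and> set3 x = T} = 6" unfolding fib using card6 abc by auto
    finally show "(\<Sum>x\<in>{x. x \<in> ?D \<and> set3 x = T}. ?f x) = 6 * ?sg T" by simp
  qed
  also have "\<dots> = 6 * (\<Sum>T\<in>?S3. ?sg T)" by (simp add: sum_distrib_left)
  also have "(\<Sum>T\<in>?S3. ?sg T) = (\<Sum>T\<in>?S3 \<inter> {T. good T}. 1) + (\<Sum>T\<in>?S3 \<inter> - {T. good T}. -1)"
    by (rule sum.If_cases) simp
  also have "\<dots> = int (nP True B) - int (nP False B)"
  proof -
    have "?S3 \<inter> {T. good T} = {T. T \<subseteq> B \<and> card T = 3 \<and> good T = True}" by auto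
    moreover have "?S3 \<inter> - {T. good T} = {T. T \<subseteq> B \<and> card T = 3 \<and> good T = False}" by auto
    ultimately show ?thesis unfolding nP_def by simp
  qed
  finally show ?thesis .
qed

end


lemma per_add: fixes F :: "int \<Rightarrow> 'b" and k :: int
  assumes per: "\<And>x. F x = F (x mod k)"
  shows "F (x mod k + y) = F (x + y)"
proof -
  have "F (x mod k + y) = F ((x mod k + y) mod k)" by (rule per)
  also have "(x mod k + y) mod k = (x + y) mod k" by (simp add: mod_add_left_eq)
  finally show ?thesis using per[of "x + y"] by simp
qed

lemma shift_sum: fixes h :: "int \<Rightarrow> 'b::comm_monoid_add" and k :: nat
  assumes k: "k > 0" and per: "\<And>x. h x = h (x mod int k)"
  shows "(\<Sum>j<k. h (int j - c)) = (\<Sum>j<k. h (int j))"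
proof -
  define s where "s j = nat ((int j - c) mod int k)" for j
  have s_int: "int (s j) = (int j - c) mod int k" for j unfolding s_def using k by simp
  have s_lt: "s j < k" for j using k s_int[of j] by (metis of_nat_less_iff pos_mod_bound of_nat_0_less_iff)
  have inj: "inj_on s {..<k}"
  proof
    fix j j' assume jj: "j \<in> {..<k}" "j' \<in> {..<k}" "s j = s j'"
    hence "(int j - c) mod int k = (int j' - c) mod int k" using s_int by metis
    hence "((int j - c) mod int k + c) mod int k = ((int j' - c) mod int k + c) mod int k" by simp
    hence "int j mod int k = int j' mod int k" by (simp add: mod_add_left_eq)
    thus "j = j'" using jj by simp
  qed
  have im: "s ` {..<k} = {..<k}" by (rule endo_inj_surj) (use s_lt inj in auto)
  have "(\<Sum>j<k. h (int j - c)) = (\<Sum>j<k. h (int (s j)))"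
    by (rule sum.cong[OF refl]) (simp add: s_int per[symmetric])
  also have "\<dots> = (\<Sum>m\<in>s ` {..<k}. h (int m))" by (simp add: sum.reindex[OF inj])
  finally show ?thesis using im by simp
qed

lemma rotation: fixes F :: "int \<Rightarrow> int" and k :: nat
  assumes k: "k > 0" and per: "\<And>x. F x = F (x mod int k)"
  shows "(\<Sum>i<k. \<Sum>j<k. \<Sum>l<k. F (int j - int i) * F (int l - int j) * F (int i - int l))
    = int k * (\<Sum>j<k. \<Sum>l<k. F (int j) * F (int l - int j) * F (- int l))"
proof -
  define G where "G a b = F a * F (b - a) * F (- b)" for a b
  have perG2: "G a x = G a (x mod int k)" for a x
  proof -
    have "F (x - a) = F (x mod int k + (- a))" using per_add[where F=F and k="int k", OF per, of x "-a"] by simp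
    moreover have "F (- x) = F (- (x mod int k))"
      using per[of "-x"] per[of "- (x mod int k)"] by (simp add: mod_minus_eq)
    ultimately show ?thesis unfolding G_def by simp
  qed
  have perG1: "(\<Sum>l<k. G x (int l)) = (\<Sum>l<k. G (x mod int k) (int l))" for x
  proof -
    have "F (int l - x) = F (int l - x mod int k)" for l
      using per[of "int l - x"] per[of "int l - x mod int k"] by (simp add: mod_diff_right_eq)
    moreover have "F x = F (x mod int k)" by (rule per)
    ultimately show ?thesis unfolding G_def by simp
  qed
  have inner: "(\<Sum>j<k. \<Sum>l<k. F (int j - int i) * F (int l - int j) * F (int i - int l))
       = (\<Sum>j<k. \<Sum>l<k. F (int j) * F (int l - int j) * F (- int l))" for i
  proof -
    have "(\<Sum>j<k. \<Sum>l<k. F (int j - int i) * F (int l - int j) * F (int i - int l))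
        = (\<Sum>j<k. \<Sum>l<k. G (int j - int i) (int l - int i))"
      unfolding G_def by (simp add: algebra_simps)
    also have "\<dots> = (\<Sum>j<k. \<Sum>l<k. G (int j - int i) (int l))"
      by (rule sum.cong[OF refl], rule shift_sum[OF k]) (rule perG2)
    also have "\<dots> = (\<Sum>j<k. \<Sum>l<k. G (int j) (int l))"
      by (rule shift_sum[OF k, where h = "\<lambda>x. \<Sum>l<k. G x (int l)"]) (rule perG1)
    finally show ?thesis unfolding G_def by simp
  qed
  show ?thesis by (simp only: inner sum_constant) simp
qed


context prim begin

abbreviation Hk :: "nat \<Rightarrow> 'a set" where "Hk k \<equiv> mult_subgroup k"

definition gam :: "nat \<Rightarrow> 'a" where "gam k = \<alpha> ^ (ord div k)"

definition Eg :: "nat \<Rightarrow> int \<Rightarrow> int" where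
  "Eg k x = sgn0 (1 - gam k ^ nat (x mod int k))"

lemma sgn0_power: "sgn0 ((x::'a) ^ n) = sgn0 x ^ n"
  by (induction n) (simp_all add: sgn0_mult sgn0_one)

lemma gam_nz: "gam k \<noteq> 0" unfolding gam_def using a_nz by simp

lemma gam_pow1: assumes "0 < k" "k dvd ord" shows "gam k ^ n = 1 \<longleftrightarrow> k dvd n"
proof -
  obtain d where d: "ord = k * d" using assms(2) by blast
  have dpos: "d > 0" using d ord_pos by (cases d) auto
  have "ord div k = d" using d assms(1) by simp
  hence "gam k ^ n = \<alpha> ^ (d * n)" unfolding gam_def by (simp add: power_mult)
  hence "gam k ^ n = 1 \<longleftrightarrow> k * d dvd d * n" using pow_eq1 d by simp
  also have "\<dots> \<longleftrightarrow> k dvd n" using dpos by (metis mult.commute nat_mult_dvd_cancel1)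
  finally show ?thesis .
qed

lemma gam_k: assumes "0 < k" "k dvd ord" shows "gam k ^ k = 1"
  using gam_pow1[OF assms] by simp

lemma gam_mod: assumes "0 < k" "k dvd ord" shows "gam k ^ n = gam k ^ (n mod k)"
proof -
  have "gam k ^ n = gam k ^ (k * (n div k) + n mod k)" by simp
  also have "\<dots> = (gam k ^ k) ^ (n div k) * gam k ^ (n mod k)" by (simp only: power_add power_mult)
  finally show ?thesis using gam_k[OF assms] by simp
qed

lemma gam_inj: assumes "0 < k" "k dvd ord" shows "inj_on (\<lambda>i. gam k ^ i) {..<k}"
proof -
  { fix i j assume ij: "i \<le> j" "j < k" "gam k ^ i = gam k ^ j"
    have "gam k ^ j = gam k ^ i * gam k ^ (j - i)" using ij(1) by (simp add: power_add[symmetric])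
    hence "gam k ^ (j - i) = 1" using ij(3) gam_nz by simp
    hence "k dvd (j - i)" using gam_pow1[OF assms] by simp
    hence "i = j" using ij by (metis diff_less_mono2 diff_zero dvd_imp_le le_antisym less_imp_diff_less
         linorder_not_le zero_less_diff le_less_trans diff_le_self)
  }
  thus ?thesis unfolding inj_on_def by (metis lessThan_iff nat_le_linear)
qed

lemma H_eq: assumes "0 < k" "k dvd ord" shows "Hk k = (\<lambda>i. gam k ^ i) ` {..<k}"
proof
  show "(\<lambda>i. gam k ^ i) ` {..<k} \<subseteq> Hk k"
  proof
    fix x assume "x \<in> (\<lambda>i. gam k ^ i) ` {..<k}"
    then obtain i where "x = gam k ^ i" by blast
    hence "x \<noteq> 0 \<and> x ^ k = 1" using gam_nz gam_k[OF assms]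
      by (simp add: power_mult[symmetric] mult.commute[of i] power_mult)
    thus "x \<in> Hk k" unfolding mult_subgroup_def by simp
  qed
  show "Hk k \<subseteq> (\<lambda>i. gam k ^ i) ` {..<k}"
  proof
    fix x assume "x \<in> Hk k"
    hence x: "x \<noteq> 0" "x ^ k = 1" unfolding mult_subgroup_def by auto
    obtain n where n: "x = \<alpha> ^ n" using nz_pow x(1) by blast
    obtain d where d: "ord = k * d" using assms(2) by blast
    have dpos: "d > 0" using d ord_pos by (cases d) auto
    have "\<alpha> ^ (n * k) = 1" using x(2) n by (simp add: power_mult)
    hence "k * d dvd n * k" using pow_eq1 d by simp
    hence "d dvd n" using assms(1) by (metis mult.commute nat_mult_dvd_cancel1)
    then obtain m where m: "n = d * m" by blast
    have "ord div k = d" using d assms(1) by simp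
    hence "x = gam k ^ m" unfolding gam_def using n m by (simp add: power_mult)
    also have "\<dots> = gam k ^ (m mod k)" by (rule gam_mod[OF assms])
    finally show "x \<in> (\<lambda>i. gam k ^ i) ` {..<k}" using assms(1) by auto
  qed
qed

lemma card_H: assumes "0 < k" "k dvd ord" shows "card (Hk k) = k"
  using H_eq[OF assms] card_image[OF gam_inj[OF assms]] by simp

lemma Eg_per: "Eg k x = Eg k (x mod int k)" unfolding Eg_def by simp

lemma diff_sgn: assumes "0 < k" "k dvd ord" "even (ord div k)"
  shows "sgn0 (gam k ^ i - gam k ^ j) = Eg k (int j - int i)"
proof -
  define r where "r = nat ((int j - int i) mod int k)"
  have r: "int r = (int j - int i) mod int k" unfolding r_def using assms(1) by simp
  have "int (i + r) mod int k = int j mod int k"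
    using r by (simp add: mod_add_right_eq)
  hence "(i + r) mod k = j mod k" by (metis of_nat_eq_iff of_nat_mod)
  hence "gam k ^ (i + r) = gam k ^ j" using gam_mod[OF assms(1,2)] by metis
  hence "gam k ^ i - gam k ^ j = gam k ^ i * (1 - gam k ^ r)" by (simp add: power_add algebra_simps)
  hence "sgn0 (gam k ^ i - gam k ^ j) = sgn0 (gam k) ^ i * sgn0 (1 - gam k ^ r)"
    by (simp add: sgn0_mult sgn0_power)
  moreover have "sgn0 (gam k) = 1" unfolding gam_def using sgn0_pow_a assms(3) by simp
  ultimately show ?thesis unfolding Eg_def r_def by simp
qed

lemma Sord_H: assumes "0 < k" "k dvd ord" "even (ord div k)"
  shows "Sord (Some ` Hk k) = int k * (\<Sum>j<k. \<Sum>l<k. Eg k (int j) * Eg k (int l - int j) * Eg k (- int l))"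
proof -
  let ?p = "\<lambda>i. gam k ^ i"
  have "Sord (Some ` Hk k) = (\<Sum>x\<in>Hk k. \<Sum>y\<in>Hk k. \<Sum>z\<in>Hk k. sgn0 ((x - y) * (y - z) * (z - x)))"
    unfolding Sord_def by (simp add: sum.reindex tri_Some)
  also have "\<dots> = (\<Sum>i<k. \<Sum>j<k. \<Sum>l<k. sgn0 ((?p i - ?p j) * (?p j - ?p l) * (?p l - ?p i)))"
    unfolding H_eq[OF assms(1,2)] by (simp add: sum.reindex[OF gam_inj[OF assms(1,2)]])
  also have "\<dots> = (\<Sum>i<k. \<Sum>j<k. \<Sum>l<k. Eg k (int j - int i) * Eg k (int l - int j) * Eg k (int i - int l))"
    by (simp add: sgn0_mult diff_sgn[OF assms])
  also have "\<dots> = int k * (\<Sum>j<k. \<Sum>l<k. Eg k (int j) * Eg k (int l - int j) * Eg k (- int l))"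
    by (rule rotation[OF assms(1)]) (rule Eg_per)
  finally show ?thesis .
qed

end


lemma sum13: "(\<Sum>j<(13::nat). f j) = f 0 + f 1 + f 2 + f 3 + f 4 + f 5 + f 6 + f 7 + f 8 + f 9 + f 10 + f 11 + (f 12 :: int)"
  by (simp add: lessThan_nat_numeral eval_nat_numeral)

lemma sum26: "(\<Sum>j<(26::nat). f j) = f 0 + f 1 + f 2 + f 3 + f 4 + f 5 + f 6 + f 7 + f 8 + f 9 + f 10 + f 11 + f 12
   + f 13 + f 14 + f 15 + f 16 + f 17 + f 18 + f 19 + f 20 + f 21 + f 22 + f 23 + f 24 + (f 25 :: int)"
  by (simp add: lessThan_nat_numeral eval_nat_numeral)

lemma poly13: fixes e :: "int \<Rightarrow> int"
  assumes "e 0 = 0" "e 7 = e 6" "e 8 = e 5" "e 9 = e 4" "e 10 = e 3" "e 11 = e 2" "e 12 = e 1"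
  shows "(\<Sum>j<13. \<Sum>l<13. e (int j mod 13) * e ((int l - int j) mod 13) * e ((- int l) mod 13)) = 6 * e 1 * e 1 * e 2 + 12 * e 1 * e 2 * e 3 + 12 * e 1 * e 3 * e 4 + 12 * e 1 * e 4 * e 5 + 12 * e 1 * e 5 * e 6 + 6 * e 1 * e 6 * e 6 + 6 * e 2 * e 2 * e 4 + 12 * e 2 * e 3 * e 5 + 12 * e 2 * e 4 * e 6 + 12 * e 2 * e 5 * e 6 + 6 * e 3 * e 3 * e 6 + 12 * e 3 * e 4 * e 6 + 6 * e 3 * e 5 * e 5 + 6 * e 4 * e 4 * e 5"
  unfolding sum13 using assms by (simp add: algebra_simps)

lemma num13: fixes e :: "int \<Rightarrow> int"
  assumes "e 0 = 0" "e 7 = e 6" "e 8 = e 5" "e 9 = e 4" "e 10 = e 3" "e 11 = e 2" "e 12 = e 1"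
    "e 1 = 1 \<or> e 1 = -1" "e 2 = 1 \<or> e 2 = -1" "e 3 = 1 \<or> e 3 = -1"
    "e 4 = 1 \<or> e 4 = -1" "e 5 = 1 \<or> e 5 = -1" "e 6 = 1 \<or> e 6 = -1"
  shows "(\<Sum>j<13. \<Sum>l<13. e (int j mod 13) * e ((int l - int j) mod 13) * e ((- int l) mod 13)) = 0
    \<longleftrightarrow> [e 1, e 2, e 3, e 4, e 5, e 6] \<in> {[1,1,-1,1,-1,-1], [-1,-1,1,-1,1,1],
              [1,1,-1,-1,-1,1], [-1,-1,1,1,1,-1],
              [1,-1,1,1,-1,-1], [-1,1,-1,-1,1,1],
              [1,-1,1,-1,-1,1], [-1,1,-1,1,1,-1]}"
  unfolding poly13[OF assms(1-7)] using assms(8-13) by (elim disjE) simp_all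

lemma poly26: fixes e f :: "int \<Rightarrow> int" and s :: int
  assumes "f 0 = 0" "f 1 = e 6 * e 1" "f 2 = e 1" "f 3 = e 5 * e 3" "f 4 = e 2" "f 5 = e 4 * e 5" "f 6 = e 3" "f 7 = e 3 * e 6" "f 8 = e 4" "f 9 = e 2 * e 4" "f 10 = e 5" "f 11 = e 1 * e 2" "f 12 = e 6" "f 13 = s" "f 14 = e 6" "f 15 = e 1 * e 2" "f 16 = e 5" "f 17 = e 2 * e 4" "f 18 = e 4" "f 19 = e 3 * e 6" "f 20 = e 3" "f 21 = e 4 * e 5" "f 22 = e 2" "f 23 = e 5 * e 3" "f 24 = e 1" "f 25 = e 6 * e 1"
  shows "(\<Sum>j<26. \<Sum>l<26. f (int j mod 26) * f ((int l - int j) mod 26) * f ((- int l) mod 26)) = 6 * e 1 * e 1 * e 1 * e 6 * e 6 + 6 * e 1 * e 1 * e 2 + 6 * e 1 * e 1 * e 2 * e 2 * e 2 + 12 * e 1 * e 1 * e 2 * e 2 * e 4 + 12 * e 1 * e 1 * e 2 * e 5 * e 6 + 12 * e 1 * e 1 * e 2 * e 6 * e 6 + 12 * e 1 * e 1 * e 2 * s + 12 * e 1 * e 1 * e 3 * e 5 * e 6 + 12 * e 1 * e 2 * e 2 * e 3 * e 4 + 12 * e 1 * e 2 * e 2 * e 3 * e 6 + 12 * e 1 * e 2 * e 3 + 24 * e 1 * e 2 * e 3 * e 4 * e 5 + 24 * e 1 * e 2 * e 3 * e 4 * e 6 + 24 * e 1 * e 2 * e 3 * e 5 * e 6 + 12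 * e 1 * e 2 * e 4 * e 4 * e 6 + 12 * e 1 * e 2 * e 4 * e 5 * e 5 + 24 * e 1 * e 2 * e 4 * e 5 * e 6 + 12 * e 1 * e 3 * e 3 * e 6 * e 6 + 12 * e 1 * e 3 * e 4 + 12 * e 1 * e 3 * e 4 * e 5 * e 5 + 24 * e 1 * e 3 * e 4 * e 5 * e 6 + 12 * e 1 * e 3 * e 4 * e 6 * e 6 + 12 * e 1 * e 4 * e 5 + 12 * e 1 * e 5 * e 6 + 6 * e 1 * e 6 * e 6 + 12 * e 1 * e 6 * e 6 * s + 6 * e 2 * e 2 * e 4 + 6 * e 2 * e 2 * e 4 * e 4 * e 4 + 12 * e 2 * e 2 * e 4 * e 4 * e 5 + 12 * e 2 * e 2 * e 4 * s + 12 * e 2 * e 3 * e 3 * e 4 * e 5 + 12 * e 2 * e 3 * e 3 * e 5 * e 6 + 24 * e 2 * e 3 * e 4 * e 5 * e 6 + 12 * e 2 * e 3 * e 5 + 12 * e 2 * e 4 * e 4 * e 5 * e 6 + 12 * e 2 * e 4 * e 6 + 12 * e 2 * e 5 * e 6 + 6 * e 3 * e 3 * e 3 * e 5 * e 5 + 12 * e 3 * e 3 * e 5 * e 5 * e 6 + 6 * e 3 * e 3 * e 6 + 6 * e 3 * e 3 * e 6 * e 6 * e 6 + 12 * e 3 * e 3 * e 6 * s + 12 * e 3 * e 4 * e 4 * e 5 * e 5 + 12 * e 3 * e 4 * e 5 * e 6 * e 6 + 12 * e 3 * e 4 * e 6 + 6 * e 3 * e 5 * e 5 + 12 * e 3 *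 e 5 * e 5 * s + 6 * e 4 * e 4 * e 5 + 6 * e 4 * e 4 * e 5 * e 5 * e 5 + 12 * e 4 * e 4 * e 5 * s"
  unfolding sum26 using assms by (simp add: algebra_simps)

lemma num26: fixes e f :: "int \<Rightarrow> int" and s :: int
  assumes "f 0 = 0" "f 1 = e 6 * e 1" "f 2 = e 1" "f 3 = e 5 * e 3" "f 4 = e 2" "f 5 = e 4 * e 5" "f 6 = e 3" "f 7 = e 3 * e 6" "f 8 = e 4" "f 9 = e 2 * e 4" "f 10 = e 5" "f 11 = e 1 * e 2" "f 12 = e 6" "f 13 = s" "f 14 = e 6" "f 15 = e 1 * e 2" "f 16 = e 5" "f 17 = e 2 * e 4" "f 18 = e 4" "f 19 = e 3 * e 6" "f 20 = e 3" "f 21 = e 4 * e 5" "f 22 = e 2" "f 23 = e 5 * e 3" "f 24 = e 1" "f 25 = e 6 * e 1"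
    "e 1 = 1 \<or> e 1 = -1" "e 2 = 1 \<or> e 2 = -1" "e 3 = 1 \<or> e 3 = -1"
    "e 4 = 1 \<or> e 4 = -1" "e 5 = 1 \<or> e 5 = -1" "e 6 = 1 \<or> e 6 = -1" "s = 1 \<or> s = -1"
  shows "(\<Sum>j<26. \<Sum>l<26. f (int j mod 26) * f ((int l - int j) mod 26) * f ((- int l) mod 26)) = 0
    \<longleftrightarrow> [e 1, e 2, e 3, e 4, e 5, e 6] \<in> {[1,1,-1,1,-1,-1], [-1,-1,1,-1,1,1],
              [1,1,-1,-1,-1,1], [-1,-1,1,1,1,-1],
              [1,-1,1,1,-1,-1], [-1,1,-1,-1,1,1],
              [1,-1,1,-1,-1,1], [-1,1,-1,1,1,-1]}"
  unfolding poly26[OF assms(1-26)] using assms(27-33) by (elim disjE) simp_all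


context prim begin

lemma Eg_per13: "Eg 13 x = Eg 13 (x mod 13)" using Eg_per[of 13 x] by simp

lemma Eg_nat: "m < k \<Longrightarrow> Eg k (int m) = sgn0 (1 - gam k ^ m)"
  unfolding Eg_def by simp

context
  assumes d52: "52 dvd ord"
begin

lemma d13: "0 < (13::nat)" "13 dvd ord" "even (ord div 13)"
proof -
  obtain m where m: "ord = 52 * m" using d52 by blast
  show "0 < (13::nat)" by simp
  show "13 dvd ord" using m by simp
  have "ord div 13 = 4 * m" using m by simp
  thus "even (ord div 13)" by simp
qed

lemma d26: "0 < (26::nat)" "26 dvd ord" "even (ord div 26)"
proof -
  obtain m where m: "ord = 52 * m" using d52 by blast
  show "0 < (26::nat)" by simp
  show "26 dvd ord" using m by simp
  have "ord div 26 = 2 * m" using m by simp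
  thus "even (ord div 26)" by simp
qed

lemma gam_sq: "gam 26 ^ 2 = gam 13"
proof -
  obtain m where m: "ord = 52 * m" using d52 by blast
  have "ord div 26 * 2 = ord div 13" using m by simp
  thus ?thesis unfolding gam_def by (metis power_mult)
qed

lemma gam_13: "gam 26 ^ 13 = -1"
proof -
  obtain m where m: "ord = 52 * m" using d52 by blast
  have "ord div 26 * 13 = ord div 2" using m by simp
  thus ?thesis unfolding gam_def using minus1 by (metis power_mult)
qed

lemma two_nz: "(2::'a) \<noteq> 0"
proof
  assume "(2::'a) = 0"
  hence "(-1::'a) = 1" by (metis add_eq_0_iff one_add_one)
  hence "gam 26 ^ 13 = 1" using gam_13 by simp
  hence "26 dvd (13::nat)" using gam_pow1[OF d26(1,2)] by simp
  thus False by simp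
qed

lemma b_ne1: "0 < t \<Longrightarrow> t < 13 \<Longrightarrow> gam 13 ^ t \<noteq> 1"
  using gam_pow1[OF d13(1,2)] by (auto dest: dvd_imp_le)

lemma sym13: assumes "0 < n" "n < 13" shows "Eg 13 (int (13 - n)) = Eg 13 (int n)"
proof -
  let ?b = "gam 13"
  have "?b ^ n * ?b ^ (13 - n) = 1" using gam_k[OF d13(1,2)] assms by (simp add: power_add[symmetric])
  hence "1 - ?b ^ (13 - n) = (- (?b ^ (13 - n))) * (1 - ?b ^ n)" by (simp add: algebra_simps)
  hence e: "sgn0 (1 - ?b ^ (13 - n)) = sgn0 (- (?b ^ (13 - n))) * sgn0 (1 - ?b ^ n)"
    by (simp only: sgn0_mult)
  have "sgn0 ?b = 1" unfolding gam_def using sgn0_pow_a d13(3) by simp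
  hence "sgn0 (- (?b ^ (13 - n))) = 1" by (simp add: sgn0_neg sgn0_power)
  hence "sgn0 (1 - ?b ^ (13 - n)) = sgn0 (1 - ?b ^ n)" using e by simp
  moreover have "Eg 13 (int (13 - n)) = sgn0 (1 - ?b ^ (13 - n))" using Eg_nat[of "13 - n" 13] assms by simp
  moreover have "Eg 13 (int n) = sgn0 (1 - ?b ^ n)" using Eg_nat[of n 13] assms by simp
  ultimately show ?thesis by simp
qed

lemma Eg26_even: assumes "n < 13" shows "Eg 26 (int (2 * n)) = Eg 13 (int n)"
proof -
  have a: "Eg 26 (int (2 * n)) = sgn0 (1 - gam 26 ^ (2 * n))" using Eg_nat[of "2*n" 26] assms by simp
  have b: "gam 26 ^ (2 * n) = gam 13 ^ n" by (simp add: power_mult gam_sq)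
  have c: "Eg 13 (int n) = sgn0 (1 - gam 13 ^ n)" using Eg_nat[of n 13] assms by simp
  show ?thesis unfolding a b c ..
qed

lemma Eg26_13: "Eg 26 13 = sgn0 (2::'a)"
proof -
  have "Eg 26 13 = sgn0 (1 - gam 26 ^ 13)" using Eg_nat[of 13 26] by simp
  thus ?thesis using gam_13 by simp
qed

lemma Eg26_odd: assumes "0 < t" "t < 13" "int m mod 26 = int ((2*t+13) mod 26)"
  shows "Eg 26 (int m) = Eg 13 (int t) * Eg 13 (int (2*t))"
proof -
  let ?b = "gam 13" and ?g = "gam 26"
  have "nat (int m mod 26) = (2*t+13) mod 26" using assms(3) by simp
  hence "Eg 26 (int m) = sgn0 (1 - ?g ^ ((2*t+13) mod 26))" unfolding Eg_def by simp
  also have "?g ^ ((2*t+13) mod 26) = ?g ^ (2*t+13)" using gam_mod[OF d26(1,2)] by metis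
  also have "\<dots> = - (?b ^ t)" using gam_sq gam_13 by (simp add: power_add power_mult)
  finally have 1: "Eg 26 (int m) = sgn0 (1 + ?b ^ t)" by simp
  have 2: "Eg 13 (int t) = sgn0 (1 - ?b ^ t)" using assms Eg_nat by simp
  have "Eg 13 (int (2*t)) = Eg 13 (int ((2*t) mod 13))" using Eg_per13[of "int (2*t)"] by (simp only: of_nat_mod) simp
  also have "\<dots> = sgn0 (1 - ?b ^ ((2*t) mod 13))" using Eg_nat[of "(2*t) mod 13" 13] by simp
  also have "?b ^ ((2*t) mod 13) = ?b ^ (2*t)" using gam_mod[OF d13(1,2)] by metis
  finally have 3: "Eg 13 (int (2*t)) = sgn0 (1 - ?b ^ t) * sgn0 (1 + ?b ^ t)"
    by (simp add: sgn0_mult[symmetric] power_mult algebra_simps power2_eq_square)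
  have "1 - ?b ^ t \<noteq> 0" using b_ne1 assms by simp
  hence "sgn0 (1 - ?b ^ t) * sgn0 (1 - ?b ^ t) = 1" by (rule sgn0_sq)
  thus ?thesis using 1 2 3 by (metis mult.assoc mult.commute mult_1)
qed

lemma Eg13_pm: "0 < i \<Longrightarrow> i < 13 \<Longrightarrow> Eg 13 (int i) = 1 \<or> Eg 13 (int i) = -1"
  using sgn0_pm b_ne1 Eg_nat by simp

lemma S13_iff: "(\<Sum>j<13. \<Sum>l<13. Eg 13 (int j) * Eg 13 (int l - int j) * Eg 13 (- int l)) = 0
    \<longleftrightarrow> [Eg 13 1, Eg 13 2, Eg 13 3, Eg 13 4, Eg 13 5, Eg 13 6] \<in>
             {[1,1,-1,1,-1,-1], [-1,-1,1,-1,1,1],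
              [1,1,-1,-1,-1,1], [-1,-1,1,1,1,-1],
              [1,-1,1,1,-1,-1], [-1,1,-1,-1,1,1],
              [1,-1,1,-1,-1,1], [-1,1,-1,1,1,-1]}"
proof -
  have "(\<Sum>j<13. \<Sum>l<13. Eg 13 (int j) * Eg 13 (int l - int j) * Eg 13 (- int l))
     = (\<Sum>j<13. \<Sum>l<13. Eg 13 (int j mod 13) * Eg 13 ((int l - int j) mod 13) * Eg 13 ((- int l) mod 13))"
    by (simp only: Eg_per13[symmetric])
  moreover have "Eg 13 0 = 0" unfolding Eg_def by (simp add: sgn0_def)
  moreover have "Eg 13 7 = Eg 13 6" "Eg 13 8 = Eg 13 5" "Eg 13 9 = Eg 13 4" "Eg 13 10 = Eg 13 3"
     "Eg 13 11 = Eg 13 2" "Eg 13 12 = Eg 13 1"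
    using sym13[of 6] sym13[of 5] sym13[of 4] sym13[of 3] sym13[of 2] sym13[of 1] by simp_all
  moreover have "Eg 13 1 = 1 \<or> Eg 13 1 = -1" "Eg 13 2 = 1 \<or> Eg 13 2 = -1" "Eg 13 3 = 1 \<or> Eg 13 3 = -1"
     "Eg 13 4 = 1 \<or> Eg 13 4 = -1" "Eg 13 5 = 1 \<or> Eg 13 5 = -1" "Eg 13 6 = 1 \<or> Eg 13 6 = -1"
    using Eg13_pm[of 1] Eg13_pm[of 2] Eg13_pm[of 3] Eg13_pm[of 4] Eg13_pm[of 5] Eg13_pm[of 6] by simp_all
  ultimately show ?thesis using num13[of "Eg 13"] by simp
qed

lemma S26_iff: "(\<Sum>j<26. \<Sum>l<26. Eg 26 (int j) * Eg 26 (int l - int j) * Eg 26 (- int l)) = 0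
    \<longleftrightarrow> [Eg 13 1, Eg 13 2, Eg 13 3, Eg 13 4, Eg 13 5, Eg 13 6] \<in>
             {[1,1,-1,1,-1,-1], [-1,-1,1,-1,1,1],
              [1,1,-1,-1,-1,1], [-1,-1,1,1,1,-1],
              [1,-1,1,1,-1,-1], [-1,1,-1,-1,1,1],
              [1,-1,1,-1,-1,1], [-1,1,-1,1,1,-1]}"
proof -
  have Eg_per26: "Eg 26 x = Eg 26 (x mod 26)" for x using Eg_per[of 26 x] by simp
  have "(\<Sum>j<26. \<Sum>l<26. Eg 26 (int j) * Eg 26 (int l - int j) * Eg 26 (- int l))
     = (\<Sum>j<26. \<Sum>l<26. Eg 26 (int j mod 26) * Eg 26 ((int l - int j) mod 26) * Eg 26 ((- int l) mod 26))"
    by (simp only: Eg_per26[symmetric])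
  have f0: "Eg 26 0 = 0" unfolding Eg_def by (simp add: sgn0_def)
  have f1: "Eg 26 1 = Eg 13 6 * Eg 13 1" using Eg26_odd[of 7 1] sym13[of 6] Eg_per13[of 14] by simp
  have f2: "Eg 26 2 = Eg 13 1" using Eg26_even[of 1]  by simp
  have f3: "Eg 26 3 = Eg 13 5 * Eg 13 3" using Eg26_odd[of 8 3] sym13[of 5] Eg_per13[of 16] by simp
  have f4: "Eg 26 4 = Eg 13 2" using Eg26_even[of 2]  by simp
  have f5: "Eg 26 5 = Eg 13 4 * Eg 13 5" using Eg26_odd[of 9 5] sym13[of 4] Eg_per13[of 18] by simp
  have f6: "Eg 26 6 = Eg 13 3" using Eg26_even[of 3]  by simp
  have f7: "Eg 26 7 = Eg 13 3 * Eg 13 6" using Eg26_odd[of 10 7] sym13[of 3] Eg_per13[of 20] sym13[of 6] by simp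
  have f8: "Eg 26 8 = Eg 13 4" using Eg26_even[of 4]  by simp
  have f9: "Eg 26 9 = Eg 13 2 * Eg 13 4" using Eg26_odd[of 11 9] sym13[of 2] Eg_per13[of 22] sym13[of 4] by simp
  have f10: "Eg 26 10 = Eg 13 5" using Eg26_even[of 5]  by simp
  have f11: "Eg 26 11 = Eg 13 1 * Eg 13 2" using Eg26_odd[of 12 11] sym13[of 1] Eg_per13[of 24] sym13[of 2] by simp
  have f12: "Eg 26 12 = Eg 13 6" using Eg26_even[of 6]  by simp
  have f13: "Eg 26 13 = sgn0 (2::'a)" by (rule Eg26_13)
  have f14: "Eg 26 14 = Eg 13 6" using Eg26_even[of 7] sym13[of 6] by simp
  have f15: "Eg 26 15 = Eg 13 1 * Eg 13 2" using Eg26_odd[of 1 15] by simp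
  have f16: "Eg 26 16 = Eg 13 5" using Eg26_even[of 8] sym13[of 5] by simp
  have f17: "Eg 26 17 = Eg 13 2 * Eg 13 4" using Eg26_odd[of 2 17] by simp
  have f18: "Eg 26 18 = Eg 13 4" using Eg26_even[of 9] sym13[of 4] by simp
  have f19: "Eg 26 19 = Eg 13 3 * Eg 13 6" using Eg26_odd[of 3 19] by simp
  have f20: "Eg 26 20 = Eg 13 3" using Eg26_even[of 10] sym13[of 3] by simp
  have f21: "Eg 26 21 = Eg 13 4 * Eg 13 5" using Eg26_odd[of 4 21] sym13[of 5] by simp
  have f22: "Eg 26 22 = Eg 13 2" using Eg26_even[of 11] sym13[of 2] by simp
  have f23: "Eg 26 23 = Eg 13 5 * Eg 13 3" using Eg26_odd[of 5 23] sym13[of 3] by simp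
  have f24: "Eg 26 24 = Eg 13 1" using Eg26_even[of 12] sym13[of 1] by simp
  have f25: "Eg 26 25 = Eg 13 6 * Eg 13 1" using Eg26_odd[of 6 25] sym13[of 1] by simp
  have pm: "Eg 13 1 = 1 \<or> Eg 13 1 = -1" "Eg 13 2 = 1 \<or> Eg 13 2 = -1" "Eg 13 3 = 1 \<or> Eg 13 3 = -1"
     "Eg 13 4 = 1 \<or> Eg 13 4 = -1" "Eg 13 5 = 1 \<or> Eg 13 5 = -1" "Eg 13 6 = 1 \<or> Eg 13 6 = -1"
    using Eg13_pm[of 1] Eg13_pm[of 2] Eg13_pm[of 3] Eg13_pm[of 4] Eg13_pm[of 5] Eg13_pm[of 6] by simp_all
  have s: "sgn0 (2::'a) = 1 \<or> sgn0 (2::'a) = -1" using sgn0_pm two_nz by blast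
  note N = num26[of "Eg 26" "Eg 13" "sgn0 (2::'a)", OF f0 f1 f2 f3 f4 f5 f6 f7 f8 f9 f10 f11 f12 f13 f14 f15 f16 f17 f18 f19 f20 f21 f22 f23 f24 f25 pm s]
  show ?thesis using N \<open>(\<Sum>j<26. _) = _\<close> by simp
qed

end
end


lemma design_iff:
  fixes \<alpha> :: "'a::{finite,field}"
  assumes p: "prim \<alpha> ord" and d: "0 < k" "k dvd ord" "even (ord div k)" "3 \<le> k"
  shows "gives_3design TYPE('a) k \<longleftrightarrow>
     (\<Sum>j<k. \<Sum>l<k. prim.Eg \<alpha> ord k (int j) * prim.Eg \<alpha> ord k (int l - int j) * prim.Eg \<alpha> ord k (- int l)) = 0"
proof -
  interpret prim \<alpha> ord by (rule p)
  let ?B = "Some ` (mult_subgroup k :: 'a set)"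
  have cB: "card ?B = k" using card_H[OF d(1,2)] by (simp add: card_image)
  have "gives_3design TYPE('a) k \<longleftrightarrow> starter3 k ?B" unfolding gives_3design_def ..
  also have "\<dots> \<longleftrightarrow> nP True ?B = nP False ?B" using starter_iff[of ?B k] cB d(4) by simp
  also have "\<dots> \<longleftrightarrow> Sord ?B = 0" using Sord_eq[of ?B] by simp
  also have "\<dots> \<longleftrightarrow> (\<Sum>j<k. \<Sum>l<k. Eg k (int j) * Eg k (int l - int j) * Eg k (- int l)) = 0"
    using Sord_H[OF d(1-3)] d(1) by simp
  finally show ?thesis .
qed

theorem theorem5p1:
  fixes \<alpha> :: "'a::{finite,field}"
  assumes "card (UNIV :: 'a set) mod 52 = 1"
    and "primitive_root \<alpha>"
  defines "\<beta> \<equiv> \<alpha> ^ ((card (UNIV :: 'a set) - 1) div 13)"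
  shows "(gives_3design TYPE('a) 13 \<longleftrightarrow> gives_3design TYPE('a) 26)
       \<and> (gives_3design TYPE('a) 26 \<longleftrightarrow>
           map (\<lambda>i. qchi (1 - \<beta> ^ i)) [1..<7] \<in>
             {[1,1,-1,1,-1,-1], [-1,-1,1,-1,1,1],
              [1,1,-1,-1,-1,1], [-1,-1,1,1,1,-1],
              [1,-1,1,1,-1,-1], [-1,1,-1,-1,1,1],
              [1,-1,1,-1,-1,1], [-1,1,-1,1,1,-1]})"
proof -
  let ?Q = "card (UNIV :: 'a set)"
  have "?Q mod 52 mod 4 = ?Q mod 4" by (rule mod_mod_cancel) simp
  hence q4: "?Q mod 4 = 1" using assms(1) by simp
  have p: "prim \<alpha> (?Q - 1)" by unfold_locales (use assms(2) q4 in auto)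
  interpret prim \<alpha> "?Q - 1" by (rule p)
  have Q1: "1 \<le> ?Q" by (simp add: Suc_leI card_gt_0_iff)
  have "?Q mod 52 = 1 mod 52" using assms(1) by simp
  hence d52: "52 dvd (?Q - 1)" using mod_eq_dvd_iff_nat[OF Q1, of 52] by (simp only:)
  have bg: "\<beta> = gam 13" unfolding \<beta>_def gam_def ..
  have i13: "gives_3design TYPE('a) 13 \<longleftrightarrow> (\<Sum>j<13. \<Sum>l<13. Eg 13 (int j) * Eg 13 (int l - int j) * Eg 13 (- int l)) = 0"
    using design_iff[OF p d13[OF d52]] by simp
  have i26: "gives_3design TYPE('a) 26 \<longleftrightarrow> (\<Sum>j<26. \<Sum>l<26. Eg 26 (int j) * Eg 26 (int l - int j) * Eg 26 (- int l)) = 0"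
    using design_iff[OF p d26[OF d52]] by simp
  have qe: "qchi (1 - \<beta> ^ i) = Eg 13 (int i)" if "0 < i" "i < 13" for i
  proof -
    have "1 - \<beta> ^ i \<noteq> 0" using b_ne1[OF d52 that] bg by simp
    thus ?thesis using Eg_nat[of i 13] that bg unfolding sgn0_def by simp
  qed
  have u: "[1..<7] = [1::nat,2,3,4,5,6]" by (simp add: upt_conv_Cons)
  have q1: "qchi (1 - \<beta> ^ 1) = Eg 13 1" using qe[of 1] by simp
  have q2: "qchi (1 - \<beta> ^ 2) = Eg 13 2" using qe[of 2] by simp
  have q3: "qchi (1 - \<beta> ^ 3) = Eg 13 3" using qe[of 3] by simp
  have q4: "qchi (1 - \<beta> ^ 4) = Eg 13 4" using qe[of 4] by simp
  have q5: "qchi (1 - \<beta> ^ 5) = Eg 13 5" using qe[of 5] by simp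
  have q6: "qchi (1 - \<beta> ^ 6) = Eg 13 6" using qe[of 6] by simp
  have "map (\<lambda>i. qchi (1 - \<beta> ^ i)) [1..<7] = [Eg 13 1, Eg 13 2, Eg 13 3, Eg 13 4, Eg 13 5, Eg 13 6]"
    unfolding u list.map q1 q2 q3 q4 q5 q6 ..
  thus ?thesis using i13 i26 S13_iff[OF d52] S26_iff[OF d52] by simp
qed


end
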